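(* Let $G_1$ be a restricted frame graph, let $G_2$ be a chandelier with pivot $p$, and let $v\in V(G_1)$. Then the graph obtained from the disjoint union of $G_1$ and $G_2$ by identifying $v$ with $p$ is a restricted frame graph.
   Context: A chandelier is a graph obtained from a tree $T$ by adding a new vertex, the pivot, adjacent to every leaf of $T$. A frame is the boundary of an axis-parallel box $I\times J\subset\mathbb R^2$. A graph $G$ is a restricted frame graph if there is a family of frames $\{F_u : u\in V(G)\}$ with $uw\in E(G)$ iff $F_u\cap F_w\neq\emptyset$, satisfying: (1) corners of a frame do not coincide with any point of another frame; (2) the left side of any frame does not intersect any other frame; (3) if the right side of a frame intersects a second frame, this right side intersects both the top and the bottom side of the second frame; (4) if two frames have non-empty intersection, then no frame is entirely contained in the intersection of the two regions bounded by these two frames. *)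

theory Defs
  imports Main "HOL.Real"
begin

text \<open>A (finite simple) graph is given by a vertex set V and an adjacency
relation E, which is only consulted on V.\<close>

definition simple_graph :: "'a set \<Rightarrow> ('a \<Rightarrow> 'a \<Rightarrow> bool) \<Rightarrow> bool" where
  "simple_graph V E \<longleftrightarrow> finite V \<and>
     (\<forall>x\<in>V. \<forall>y\<in>V. E x y \<longrightarrow> E y x) \<and> (\<forall>x\<in>V. \<not> E x x)"

definition connected_graph :: "'a set \<Rightarrow> ('a \<Rightarrow> 'a \<Rightarrow> bool) \<Rightarrow> bool" where
  "connected_graph V E \<longleftrightarrow>
     (\<forall>x\<in>V. \<forall>y\<in>V. (\<lambda>a b. a \<in> V \<and> b \<in> V \<and> E a b)\<^sup>*\<^sup>* x y)"

definition is_cycle :: "'a set \<Rightarrow> ('a \<Rightarrow> 'a \<Rightarrow> bool) \<Rightarrow> 'a list \<Rightarrow> bool" where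
  "is_cycle V E cs \<longleftrightarrow> length cs \<ge> 3 \<and> distinct cs \<and> set cs \<subseteq> V \<and>
     (\<forall>i. Suc i < length cs \<longrightarrow> E (cs ! i) (cs ! Suc i)) \<and>
     E (last cs) (hd cs)"

definition is_tree :: "'a set \<Rightarrow> ('a \<Rightarrow> 'a \<Rightarrow> bool) \<Rightarrow> bool" where
  "is_tree V E \<longleftrightarrow> simple_graph V E \<and> V \<noteq> {} \<and> connected_graph V E \<and>
     \<not> (\<exists>cs. is_cycle V E cs)"

definition degree :: "'a set \<Rightarrow> ('a \<Rightarrow> 'a \<Rightarrow> bool) \<Rightarrow> 'a \<Rightarrow> nat" where
  "degree V E x = card {y\<in>V. E x y}"

definition is_leaf :: "'a set \<Rightarrow> ('a \<Rightarrow> 'a \<Rightarrow> bool) \<Rightarrow> 'a \<Rightarrow> bool" where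
  "is_leaf V E x \<longleftrightarrow> x \<in> V \<and> degree V E x = 1"

definition chandelier :: "'a set \<Rightarrow> ('a \<Rightarrow> 'a \<Rightarrow> bool) \<Rightarrow> 'a \<Rightarrow> bool" where
  "chandelier V E p \<longleftrightarrow> simple_graph V E \<and> p \<in> V \<and>
     is_tree (V - {p}) E \<and>
     (\<forall>x\<in>V - {p}. E p x \<longleftrightarrow> is_leaf (V - {p}) E x)"

text \<open>Disjoint union of (V1,E1) and (V2,E2) with v \<in> V1 identified with p \<in> V2.
The identified vertex is represented by Inl v.\<close>
definition glue_V :: "'a set \<Rightarrow> 'b set \<Rightarrow> 'b \<Rightarrow> ('a + 'b) set" where
  "glue_V V1 V2 p = Inl ` V1 \<union> Inr ` (V2 - {p})"

fun glue_E :: "('a \<Rightarrow> 'a \<Rightarrow> bool) \<Rightarrow> ('b \<Rightarrow> 'b \<Rightarrow> bool) \<Rightarrow> 'a \<Rightarrow> 'b \<Rightarrow>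
    ('a + 'b) \<Rightarrow> ('a + 'b) \<Rightarrow> bool" where
  "glue_E E1 E2 v p (Inl x) (Inl y) = E1 x y"
| "glue_E E1 E2 v p (Inr x) (Inr y) = E2 x y"
| "glue_E E1 E2 v p (Inl x) (Inr y) = (x = v \<and> E2 p y)"
| "glue_E E1 E2 v p (Inr x) (Inl y) = (y = v \<and> E2 x p)"

text \<open>A frame is the boundary of an axis-parallel box [a,b] \<times> [c,d] with a < b, c < d,
represented by the tuple (a, b, c, d).\<close>
type_synonym frame = "real \<times> real \<times> real \<times> real"

definition valid_frame :: "frame \<Rightarrow> bool" where
  "valid_frame F \<longleftrightarrow> (case F of (a, b, c, d) \<Rightarrow> a < b \<and> c < d)"

definition region :: "frame \<Rightarrow> (real \<times> real) set" where
  "region F = (case F of (a, b, c, d) \<Rightarrow> {a..b} \<times> {c..d})"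

definition left_side :: "frame \<Rightarrow> (real \<times> real) set" where
  "left_side F = (case F of (a, b, c, d) \<Rightarrow> {a} \<times> {c..d})"

definition right_side :: "frame \<Rightarrow> (real \<times> real) set" where
  "right_side F = (case F of (a, b, c, d) \<Rightarrow> {b} \<times> {c..d})"

definition bottom_side :: "frame \<Rightarrow> (real \<times> real) set" where
  "bottom_side F = (case F of (a, b, c, d) \<Rightarrow> {a..b} \<times> {c})"

definition top_side :: "frame \<Rightarrow> (real \<times> real) set" where
  "top_side F = (case F of (a, b, c, d) \<Rightarrow> {a..b} \<times> {d})"

definition frame_pts :: "frame \<Rightarrow> (real \<times> real) set" where
  "frame_pts F = left_side F \<union> right_side F \<union> bottom_side F \<union> top_side F"

definition corners :: "frame \<Rightarrow> (real \<times> real) set" where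
  "corners F = (case F of (a, b, c, d) \<Rightarrow> {(a, c), (a, d), (b, c), (b, d)})"

definition restricted_frame_rep ::
    "'a set \<Rightarrow> ('a \<Rightarrow> 'a \<Rightarrow> bool) \<Rightarrow> ('a \<Rightarrow> frame) \<Rightarrow> bool" where
  "restricted_frame_rep V E F \<longleftrightarrow>
     (\<forall>u\<in>V. valid_frame (F u)) \<and>
     (\<forall>u\<in>V. \<forall>w\<in>V. u \<noteq> w \<longrightarrow> (E u w \<longleftrightarrow> frame_pts (F u) \<inter> frame_pts (F w) \<noteq> {})) \<and>
     \<comment> \<open>(1) corners of a frame avoid every other frame\<close>
     (\<forall>u\<in>V. \<forall>w\<in>V. u \<noteq> w \<longrightarrow> corners (F u) \<inter> frame_pts (F w) = {}) \<and>
     \<comment> \<open>(2) the left side of a frame avoids every other frame\<close>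
     (\<forall>u\<in>V. \<forall>w\<in>V. u \<noteq> w \<longrightarrow> left_side (F u) \<inter> frame_pts (F w) = {}) \<and>
     \<comment> \<open>(3) a right side meeting another frame meets its top and bottom sides\<close>
     (\<forall>u\<in>V. \<forall>w\<in>V. u \<noteq> w \<longrightarrow> right_side (F u) \<inter> frame_pts (F w) \<noteq> {} \<longrightarrow>
        right_side (F u) \<inter> top_side (F w) \<noteq> {} \<and>
        right_side (F u) \<inter> bottom_side (F w) \<noteq> {}) \<and>
     \<comment> \<open>(4) no frame lies inside the intersection of the regions of two intersecting frames\<close>
     (\<forall>u\<in>V. \<forall>w\<in>V. \<forall>z\<in>V. u \<noteq> w \<longrightarrow> frame_pts (F u) \<inter> frame_pts (F w) \<noteq> {} \<longrightarrow>
        \<not> frame_pts (F z) \<subseteq> region (F u) \<inter> region (F w))"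

definition restricted_frame_graph :: "'a set \<Rightarrow> ('a \<Rightarrow> 'a \<Rightarrow> bool) \<Rightarrow> bool" where
  "restricted_frame_graph V E \<longleftrightarrow> simple_graph V E \<and> (\<exists>F. restricted_frame_rep V E F)"

end

theory Submission
  imports Defs
begin

lemma mem_frame_pts: "(x,y) \<in> frame_pts (a,b,c,d) \<longleftrightarrow>
  ((x = a \<or> x = b) \<and> c \<le> y \<and> y \<le> d) \<or> ((y = c \<or> y = d) \<and> a \<le> x \<and> x \<le> b)"
  by (auto simp: frame_pts_def left_side_def right_side_def top_side_def bottom_side_def)

lemma mem_region: "(x,y) \<in> region (a,b,c,d) \<longleftrightarrow> a \<le> x \<and> x \<le> b \<and> c \<le> y \<and> y \<le> d"
  by (auto simp: region_def)
lemma mem_left: "(x,y) \<in> left_side (a,b,c,d) \<longleftrightarrow> x = a \<and> c \<le> y \<and> y \<le> d"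
  by (auto simp: left_side_def)
lemma mem_right: "(x,y) \<in> right_side (a,b,c,d) \<longleftrightarrow> x = b \<and> c \<le> y \<and> y \<le> d"
  by (auto simp: right_side_def)
lemma mem_top: "(x,y) \<in> top_side (a,b,c,d) \<longleftrightarrow> y = d \<and> a \<le> x \<and> x \<le> b"
  by (auto simp: top_side_def)
lemma mem_bottom: "(x,y) \<in> bottom_side (a,b,c,d) \<longleftrightarrow> y = c \<and> a \<le> x \<and> x \<le> b"
  by (auto simp: bottom_side_def)
lemma mem_corners: "(x,y) \<in> corners (a,b,c,d) \<longleftrightarrow> (x = a \<or> x = b) \<and> (y = c \<or> y = d)"
  by (auto simp: corners_def)

lemmas fr_simps = mem_frame_pts mem_region mem_left mem_right mem_top mem_bottom mem_corners

definition goodp :: "frame \<Rightarrow> frame \<Rightarrow> bool" where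
  "goodp F G \<longleftrightarrow> corners F \<inter> frame_pts G = {} \<and> left_side F \<inter> frame_pts G = {} \<and>
     (right_side F \<inter> frame_pts G \<noteq> {} \<longrightarrow>
        right_side F \<inter> top_side G \<noteq> {} \<and> right_side F \<inter> bottom_side G \<noteq> {})"

definition cross :: "frame \<Rightarrow> frame \<Rightarrow> bool" where
  "cross F G \<longleftrightarrow> (case F of (a,b,c,d) \<Rightarrow> case G of (a',b',c',d') \<Rightarrow>
     a < a' \<and> a' < b \<and> b < b' \<and> c < c' \<and> c' < d' \<and> d' < d)"

definition inside :: "frame \<Rightarrow> frame \<Rightarrow> bool" where
  "inside F G \<longleftrightarrow> (case F of (a,b,c,d) \<Rightarrow> case G of (a',b',c',d') \<Rightarrow>
     a < a' \<and> a' < b' \<and> b' < b \<and> c < c' \<and> c' < d' \<and> d' < d)"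

definition sep :: "frame \<Rightarrow> frame \<Rightarrow> bool" where
  "sep F G \<longleftrightarrow> valid_frame F \<and> valid_frame G \<and> region F \<inter> region G = {}"

lemma frame_sub_region: "valid_frame F \<Longrightarrow> frame_pts F \<subseteq> region F"
  by (cases F) (auto simp: fr_simps valid_frame_def)

lemma disj_good:
  assumes "valid_frame F" "frame_pts F \<inter> frame_pts G = {}"
  shows "goodp F G"
proof -
  obtain a b c d where F: "F = (a,b,c,d)" by (cases F) auto
  have "corners F \<subseteq> frame_pts F" "left_side F \<subseteq> frame_pts F" "right_side F \<subseteq> frame_pts F"
    using assms(1) by (auto simp: F fr_simps valid_frame_def)
  then show ?thesis using assms(2) unfolding goodp_def by blast
qed

lemma cross_props:
  assumes "cross F G"
  shows "frame_pts F \<inter> frame_pts G \<noteq> {}" "goodp F G" "goodp G F"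
    "valid_frame F" "valid_frame G"
proof -
  obtain a b c d where F: "F = (a,b,c,d)" by (cases F) auto
  obtain a' b' c' d' where G: "G = (a',b',c',d')" by (cases G) auto
  have h: "a < a'" "a' < b" "b < b'" "c < c'" "c' < d'" "d' < d"
    using assms by (auto simp: cross_def F G)
  have "(b, c') \<in> frame_pts F \<inter> frame_pts G" using h by (auto simp: F G fr_simps)
  then show "frame_pts F \<inter> frame_pts G \<noteq> {}" by blast
  show "valid_frame F" "valid_frame G" using h by (auto simp: F G valid_frame_def)
  have r1: "(b, d') \<in> right_side F \<inter> top_side G" "(b, c') \<in> right_side F \<inter> bottom_side G"
    using h by (auto simp: F G fr_simps)
  show "goodp F G" unfolding goodp_def
  proof (intro conjI impI)
    show "corners F \<inter> frame_pts G = {}" using h by (auto simp: F G fr_simps)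
    show "left_side F \<inter> frame_pts G = {}" using h by (auto simp: F G fr_simps)
  qed (use r1 in blast)+
  show "goodp G F" unfolding goodp_def
  proof (intro conjI impI)
    show "corners G \<inter> frame_pts F = {}" using h by (auto simp: F G fr_simps)
    show "left_side G \<inter> frame_pts F = {}" using h by (auto simp: F G fr_simps)
    show "right_side G \<inter> frame_pts F \<noteq> {} \<Longrightarrow> right_side G \<inter> top_side F \<noteq> {}"
      using h by (auto simp: F G fr_simps)
    show "right_side G \<inter> frame_pts F \<noteq> {} \<Longrightarrow> right_side G \<inter> bottom_side F \<noteq> {}"
      using h by (auto simp: F G fr_simps)
  qed
qed

lemma inside_props:
  assumes "inside F G"
  shows "frame_pts F \<inter> frame_pts G = {}" "goodp F G" "goodp G F"
    "valid_frame F" "valid_frame G" "region G \<subseteq> region F"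
proof -
  obtain a b c d where F: "F = (a,b,c,d)" by (cases F) auto
  obtain a' b' c' d' where G: "G = (a',b',c',d')" by (cases G) auto
  have h: "a < a'" "a' < b'" "b' < b" "c < c'" "c' < d'" "d' < d"
    using assms by (auto simp: inside_def F G)
  show 1: "frame_pts F \<inter> frame_pts G = {}" using h by (auto simp: F G fr_simps)
  show 2: "valid_frame F" "valid_frame G" using h by (auto simp: F G valid_frame_def)
  show "goodp F G" "goodp G F" using disj_good 1 2 by (auto simp: Int_commute)
  show "region G \<subseteq> region F" using h by (auto simp: F G fr_simps)
qed

lemma sep_props:
  assumes "sep F G"
  shows "frame_pts F \<inter> frame_pts G = {}" "goodp F G" "goodp G F"
proof -
  show 1: "frame_pts F \<inter> frame_pts G = {}" using assms frame_sub_region[of F] frame_sub_region[of G]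
    unfolding sep_def by blast
  show "goodp F G" "goodp G F" using disj_good 1 assms by (auto simp: Int_commute sep_def)
qed

lemma sepI:
  assumes "valid_frame F" "valid_frame G"
    "(case F of (a,b,c,d) \<Rightarrow> case G of (a',b',c',d') \<Rightarrow> b < a' \<or> b' < a \<or> d < c' \<or> d' < c)"
  shows "sep F G"
proof -
  obtain a b c d where F: "F = (a,b,c,d)" by (cases F) auto
  obtain a' b' c' d' where G: "G = (a',b',c',d')" by (cases G) auto
  show ?thesis using assms unfolding sep_def F G by (auto simp: fr_simps)
qed


definition upath :: "'b set \<Rightarrow> ('b \<Rightarrow> 'b \<Rightarrow> bool) \<Rightarrow> 'b list \<Rightarrow> bool" where
  "upath T E xs \<longleftrightarrow> set xs \<subseteq> T \<and> distinct xs \<and> (\<forall>i. Suc i < length xs \<longrightarrow> E (xs!i) (xs!Suc i))"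

lemma tree_basic:
  assumes "is_tree T E"
  shows "finite T" "\<And>x y. x \<in> T \<Longrightarrow> y \<in> T \<Longrightarrow> E x y \<Longrightarrow> E y x" "\<And>x. x \<in> T \<Longrightarrow> \<not> E x x"
    "connected_graph T E" "\<not> (\<exists>cs. is_cycle T E cs)" "T \<noteq> {}"
  using assms by (auto simp: is_tree_def simple_graph_def)

lemma tree_leaf:
  assumes tr: "is_tree T E" and r: "r \<in> T" and ne: "T \<noteq> {r}"
  shows "\<exists>l\<in>T. l \<noteq> r \<and> (\<exists>q\<in>T. E l q \<and> (\<forall>y\<in>T. E l y \<longrightarrow> y = q))"
proof -
  note sg = tree_basic[OF tr]
  obtain z where z: "z \<in> T" "z \<noteq> r" using ne r by auto
  let ?R = "\<lambda>a b. a \<in> T \<and> b \<in> T \<and> E a b"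
  have "?R\<^sup>*\<^sup>* r z" using sg(4) r z by (auto simp: connected_graph_def)
  then obtain y where y: "y \<in> T" "E r y"
    by (cases rule: converse_rtranclpE) (use z in auto)
  have yr: "y \<noteq> r" using y sg(3) r by auto
  define P where "P k \<longleftrightarrow> (\<exists>xs. upath T E xs \<and> xs \<noteq> [] \<and> hd xs = r \<and> length xs = k)" for k
  have "upath T E [r,y]" unfolding upath_def
    using y r yr by (auto simp: less_Suc_eq)
  then have P2: "P 2" unfolding P_def by (intro exI[of _ "[r,y]"]) auto
  have bnd: "\<forall>k. P k \<longrightarrow> k \<le> card T"
  proof (intro allI impI)
    fix k assume "P k"
    then obtain zs where "set zs \<subseteq> T" "distinct zs" "length zs = k" unfolding P_def upath_def by blast
    then show "k \<le> card T" using sg(1) by (metis card_mono distinct_card)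
  qed
  obtain n where n: "P n" "\<forall>k. P k \<longrightarrow> k \<le> n" using Nat.ex_has_greatest_nat[OF P2 bnd] by blast
  then obtain xs where xs: "upath T E xs" "xs \<noteq> []" "hd xs = r" "length xs = n"
    by (auto simp: P_def)
  have n2: "2 \<le> n" using n P2 by auto
  have xsT: "set xs \<subseteq> T" and dxs: "distinct xs"
    and adj: "\<And>i. Suc i < n \<Longrightarrow> E (xs!i) (xs!Suc i)" using xs by (auto simp: upath_def)
  define l where "l = last xs"
  define q where "q = xs ! (n - 2)"
  have l_eq: "l = xs ! (n - 1)" using xs by (simp add: l_def last_conv_nth)
  have lT: "l \<in> T" and qT: "q \<in> T" using xsT n2 xs(4) nth_mem[of "n-1" xs] nth_mem[of "n-2" xs]
    by (auto simp: l_eq q_def)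
  have r_eq: "r = xs ! 0" using xs by (simp add: hd_conv_nth)
  have lr: "l \<noteq> r" unfolding l_eq r_eq using dxs n2 by (simp add: nth_eq_iff_index_eq xs(4))
  have "E q l" using adj[of "n-2"] n2 by (simp add: q_def l_eq Suc_diff_Suc numeral_2_eq_2)
  then have Elq: "E l q" using sg(2) lT qT by blast
  have uniq: "\<forall>w\<in>T. E l w \<longrightarrow> w = q"
  proof (intro ballI impI)
    fix w assume w: "w \<in> T" "E l w"
    have wl: "w \<noteq> l" using w sg(3) lT by auto
    have "w \<in> set xs"
    proof (rule ccontr)
      assume nw: "w \<notin> set xs"
      have "upath T E (xs @ [w])" unfolding upath_def
      proof (intro conjI allI impI)
        show "set (xs @ [w]) \<subseteq> T" using xsT w by auto
        show "distinct (xs @ [w])" using dxs nw by auto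
        fix i assume i: "Suc i < length (xs @ [w])"
        show "E ((xs @ [w]) ! i) ((xs @ [w]) ! Suc i)"
        proof (cases "Suc i < n")
          case True then show ?thesis using adj[of i] xs(4) by (simp add: nth_append)
        next
          case False
          then have "i = n - 1" using i xs(4) by simp
          then show ?thesis using w(2) xs(4) n2 by (simp add: nth_append l_eq)
        qed
      qed
      then have "P (Suc n)" unfolding P_def using xs
        by (intro exI[of _ "xs @ [w]"]) auto
      then show False using n by auto
    qed
    then obtain i where i: "i < n" "w = xs!i" by (metis in_set_conv_nth xs(4))
    have i1: "i \<noteq> n - 1" using wl i by (auto simp: l_eq)
    show "w = q"
    proof (rule ccontr)
      assume "w \<noteq> q"
      then have "i \<noteq> n - 2" using i by (auto simp: q_def)
      then have i2: "i < n - 2" using i i1 by linarith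
      define cs where "cs = drop i xs"
      have "is_cycle T E cs" unfolding is_cycle_def
      proof (intro conjI allI impI)
        show "3 \<le> length cs" using i2 xs(4) by (simp add: cs_def)
        show "distinct cs" using dxs by (simp add: cs_def)
        show "set cs \<subseteq> T" using xsT set_drop_subset[of i xs] by (auto simp: cs_def)
        fix j assume "Suc j < length cs"
        then have "Suc (i + j) < n" using xs(4) by (simp add: cs_def)
        then show "E (cs ! j) (cs ! Suc j)" using adj[of "i+j"] i xs(4)
          by (simp add: cs_def)
      next
        show "E (last cs) (hd cs)" using w(2) i i2 xs(4)
          by (simp add: cs_def l_def hd_drop_conv_nth)
      qed
      then show False using sg(5) by blast
    qed
  qed
  show ?thesis
  proof (rule bexI[of _ l])
    show "l \<in> T" by (rule lT)
    have "E l q \<and> (\<forall>y\<in>T. E l y \<longrightarrow> y = q)" using Elq uniq by (rule conjI)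
    then have "\<exists>q'\<in>T. E l q' \<and> (\<forall>y\<in>T. E l y \<longrightarrow> y = q')" using qT by (rule bexI)
    then show "l \<noteq> r \<and> (\<exists>q'\<in>T. E l q' \<and> (\<forall>y\<in>T. E l y \<longrightarrow> y = q'))"
      using lr by (rule conjI[rotated])
  qed
qed

lemma tree_remove:
  assumes tr: "is_tree T E" and l: "l \<in> T" "q \<in> T" "E l q" "\<forall>y\<in>T. E l y \<longrightarrow> y = q"
    and ne: "T \<noteq> {l}"
  shows "is_tree (T - {l}) E"
proof -
  note sg = tree_basic[OF tr]
  have ql: "q \<noteq> l" using l(2,3) sg(3) by metis
  let ?R = "\<lambda>a b. a \<in> T \<and> b \<in> T \<and> E a b"
  let ?R' = "\<lambda>a b. a \<in> T - {l} \<and> b \<in> T - {l} \<and> E a b"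
  have key: "?R\<^sup>*\<^sup>* x y \<Longrightarrow> x \<in> T - {l} \<Longrightarrow> (y \<noteq> l \<longrightarrow> ?R'\<^sup>*\<^sup>* x y) \<and> (y = l \<longrightarrow> ?R'\<^sup>*\<^sup>* x q)" for x y
  proof (induction rule: rtranclp_induct)
    case base
    then have "x \<noteq> l" by simp
    then show ?case by simp
  next
    case (step y z)
    have IH: "(y \<noteq> l \<longrightarrow> ?R'\<^sup>*\<^sup>* x y) \<and> (y = l \<longrightarrow> ?R'\<^sup>*\<^sup>* x q)"
      using step.IH step.prems by blast
    have yz: "y \<in> T" "z \<in> T" "E y z" using step.hyps(2) by simp_all
    show ?case
    proof (cases "z = l")
      case True
      then have yl: "y \<noteq> l" using sg(3) yz by blast
      have "E l y" using sg(2)[OF yz(1) l(1)] yz(3) True by simp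
      then have "y = q" using l(4) yz(1) by blast
      then have "?R'\<^sup>*\<^sup>* x q" using IH yl by blast
      then show ?thesis using True by simp
    next
      case False
      show ?thesis
      proof (cases "y = l")
        case True
        then have "z = q" using yz l(4) by blast
        then have "?R'\<^sup>*\<^sup>* x z" using IH True by blast
        then show ?thesis using False by simp
      next
        case yl: False
        then have "?R'\<^sup>*\<^sup>* x y" using IH by blast
        moreover have "?R' y z" using yz yl False by simp
        ultimately have "?R'\<^sup>*\<^sup>* x z" by (rule rtranclp.rtrancl_into_rtrancl)
        then show ?thesis using False by simp
      qed
    qed
  qed
  have "connected_graph (T - {l}) E" unfolding connected_graph_def
  proof (intro ballI)
    fix x y assume xy: "x \<in> T - {l}" "y \<in> T - {l}"
    then have "?R\<^sup>*\<^sup>* x y" using sg(4) by (auto simp: connected_graph_def)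
    then show "?R'\<^sup>*\<^sup>* x y" using key[of x y] xy by blast
  qed
  moreover have "\<not> (\<exists>cs. is_cycle (T - {l}) E cs)"
    using sg(5) by (auto simp: is_cycle_def)
  moreover have "simple_graph (T - {l}) E" unfolding simple_graph_def
  proof (intro conjI ballI impI)
    show "finite (T - {l})" using sg(1) by simp
    fix x y assume "x \<in> T - {l}" "y \<in> T - {l}" "E x y"
    then show "E y x" using sg(2) by blast
  next
    fix x assume "x \<in> T - {l}" then show "\<not> E x x" using sg(3) by blast
  qed
  moreover have "T - {l} \<noteq> {}" using ne l by auto
  ultimately show ?thesis by (simp add: is_tree_def)
qed


definition nest :: "('b \<Rightarrow> real) \<Rightarrow> ('b \<Rightarrow> real) \<Rightarrow> 'b \<Rightarrow> 'b \<Rightarrow> bool" where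
  "nest lo hi s t \<longleftrightarrow> lo s < lo t \<and> hi t < hi s"

definition D1 :: "'b set \<Rightarrow> ('b \<Rightarrow> 'b \<Rightarrow> bool) \<Rightarrow> ('b \<Rightarrow> nat) \<Rightarrow> 'b \<Rightarrow> 'b \<Rightarrow> bool" where
  "D1 T E dep s t \<longleftrightarrow> (E s t \<and> dep t = Suc (dep s)) \<or>
     (\<not> E s t \<and> dep s + 2 \<le> dep t \<and> (\<exists>c\<in>T. E s c \<and> dep c = Suc (dep s)))"

definition prel :: "'b set \<Rightarrow> ('b \<Rightarrow> 'b \<Rightarrow> bool) \<Rightarrow> ('b \<Rightarrow> nat) \<Rightarrow> ('b \<Rightarrow> real) \<Rightarrow> ('b \<Rightarrow> real) \<Rightarrow> 'b \<Rightarrow> 'b \<Rightarrow> bool" where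
  "prel T E dep lo hi s t \<longleftrightarrow> (\<not> E s t \<and> (hi s < lo t \<or> hi t < lo s)) \<or>
     (nest lo hi s t \<and> D1 T E dep s t) \<or> (nest lo hi t s \<and> D1 T E dep t s)"

definition tdata :: "'b set \<Rightarrow> ('b \<Rightarrow> 'b \<Rightarrow> bool) \<Rightarrow> 'b \<Rightarrow> ('b \<Rightarrow> nat) \<Rightarrow> ('b \<Rightarrow> real) \<Rightarrow> ('b \<Rightarrow> real) \<Rightarrow> bool" where
  "tdata T E r dep lo hi \<longleftrightarrow> dep r = 0 \<and> (\<forall>t\<in>T. 0 < lo t \<and> lo t < hi t \<and> hi t < 1) \<and>
     (\<forall>t\<in>T. t \<noteq> r \<longrightarrow> (\<exists>s\<in>T. E t s \<and> dep t = Suc (dep s))) \<and>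
     (\<forall>s\<in>T. \<forall>t\<in>T. s \<noteq> t \<longrightarrow> prel T E dep lo hi s t)"

lemma prel_sym: "(E s t \<longleftrightarrow> E t s) \<Longrightarrow> prel T E dep lo hi s t \<Longrightarrow> prel T E dep lo hi t s"
  unfolding prel_def by blast

lemma prel_mono:
  assumes "prel T' E dep lo hi s t" "T' \<subseteq> T" "s \<in> T'" "t \<in> T'"
    "\<forall>x\<in>T'. dep' x = dep x \<and> lo' x = lo x \<and> hi' x = hi x"
  shows "prel T E dep' lo' hi' s t"
proof -
  have e: "dep' s = dep s" "lo' s = lo s" "hi' s = hi s" "dep' t = dep t" "lo' t = lo t" "hi' t = hi t"
    using assms(3,4,5) by auto
  have D: "D1 T E dep' a b" if "D1 T' E dep a b" "a \<in> T'" "b \<in> T'" for a b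
  proof -
    have e2: "dep' a = dep a" "dep' b = dep b" using assms(5) that(2,3) by auto
    from that(1) consider "E a b \<and> dep b = Suc (dep a)"
      | "\<not> E a b \<and> dep a + 2 \<le> dep b" "\<exists>c\<in>T'. E a c \<and> dep c = Suc (dep a)"
      unfolding D1_def by blast
    then show ?thesis
    proof cases
      case 1 then show ?thesis using e2 unfolding D1_def by simp
    next
      case 2
      then obtain c where c: "c \<in> T'" "E a c" "dep c = Suc (dep a)" by blast
      have "c \<in> T" "dep' c = dep c" using c(1) assms(2,5) by auto
      then show ?thesis using 2 c e2 unfolding D1_def by auto
    qed
  qed
  have "nest lo' hi' s t = nest lo hi s t" "nest lo' hi' t s = nest lo hi t s"
    unfolding nest_def using e by simp_all
  moreover have "hi s < lo t \<longleftrightarrow> hi' s < lo' t" "hi t < lo s \<longleftrightarrow> hi' t < lo' s" using e by simp_all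
  ultimately show ?thesis using assms(1) D[of s t] D[of t s] assms(3,4) unfolding prel_def by blast
qed

lemma tree_data: "is_tree T E \<Longrightarrow> r \<in> T \<Longrightarrow> \<exists>dep lo hi. tdata T E r dep lo hi"
proof (induction "card T" arbitrary: T rule: less_induct)
  case less
  note sg = tree_basic[OF less.prems(1)]
  show ?case
  proof (cases "T = {r}")
    case True
    have td: "tdata T E r (\<lambda>_. 0) (\<lambda>_. 1/3) (\<lambda>_. 2/3)" unfolding tdata_def using True by auto
    show ?thesis
      apply (rule exI[where x="\<lambda>_. 0"])
      apply (rule exI[where x="\<lambda>_. 1/3"])
      apply (rule exI[where x="\<lambda>_. 2/3"])
      by (rule td)
  next
    case False
    obtain l where l: "l \<in> T" "l \<noteq> r" and "\<exists>q\<in>T. E l q \<and> (\<forall>y\<in>T. E l y \<longrightarrow> y = q)"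
      using tree_leaf[OF less.prems False] by blast
    then obtain q where q: "q \<in> T" "E l q" "\<forall>y\<in>T. E l y \<longrightarrow> y = q" by blast
    have ql: "q \<noteq> l" using q(2) sg(3)[OF l(1)] by metis
    define T' where "T' = T - {l}"
    have Tl: "T \<noteq> {l}"
    proof
      assume "T = {l}"
      then have "r = l" using less.prems(2) by simp
      then show False using l(2) by simp
    qed
    have tr': "is_tree T' E" unfolding T'_def using tree_remove[OF less.prems(1) l(1) q Tl] .
    have cT: "card T' < card T" unfolding T'_def using card_Diff1_less[OF sg(1) l(1)] .
    have rT: "r \<in> T'" using less.prems(2) l by (simp add: T'_def)
    obtain dep lo hi where D: "tdata T' E r dep lo hi" using less(1)[OF cT tr' rT] by (elim exE)
    have qT': "q \<in> T'" using q(1) ql by (simp add: T'_def)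
    have T'T: "T' \<subseteq> T" by (auto simp: T'_def)
    have lT': "l \<notin> T'" by (simp add: T'_def)
    note D' = D[unfolded tdata_def]
    note Dr = D'[THEN conjunct1]
    note Db = D'[THEN conjunct2, THEN conjunct1]
    note Dp = D'[THEN conjunct2, THEN conjunct2, THEN conjunct1]
    note Dr2 = D'[THEN conjunct2, THEN conjunct2, THEN conjunct2]
    define S where "S = insert (hi q - lo q) ((\<lambda>s. lo s - lo q) ` {s\<in>T'. lo q < lo s})"
    have finS: "finite S" unfolding S_def T'_def using sg(1) by simp
    have Spos: "\<forall>x\<in>S. 0 < x"
    proof
      fix x assume "x \<in> S"
      then consider "x = hi q - lo q" | s where "s \<in> T'" "lo q < lo s" "x = lo s - lo q"
        unfolding S_def by blast
      then show "0 < x"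
      proof cases
        case 1 then show ?thesis using Db qT' by simp
      next
        case 2 then show ?thesis by simp
      qed
    qed
    define \<delta> where "\<delta> = Min S / 3"
    have Sne: "S \<noteq> {}" unfolding S_def by blast
    have "0 < Min S" using Min_gr_iff[OF finS Sne] Spos by blast
    then have dpos: "0 < \<delta>" unfolding \<delta>_def by simp
    have "hi q - lo q \<in> S" unfolding S_def by blast
    then have "Min S \<le> hi q - lo q" using Min_le[OF finS] by blast
    then have d1: "3 * \<delta> \<le> hi q - lo q" unfolding \<delta>_def by simp
    have d2: "3 * \<delta> \<le> lo s - lo q" if "s \<in> T'" "lo q < lo s" for s
    proof -
      have "lo s - lo q \<in> S" unfolding S_def using that by blast
      then have "Min S \<le> lo s - lo q" using Min_le[OF finS] by blast
      then show ?thesis unfolding \<delta>_def by simp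
    qed
    define dep' where "dep' = dep(l := Suc (dep q))"
    define lo' where "lo' = lo(l := lo q + \<delta>)"
    define hi' where "hi' = hi(l := lo q + 2 * \<delta>)"
    have agree: "\<forall>x\<in>T'. dep' x = dep x \<and> lo' x = lo x \<and> hi' x = hi x"
      using lT' by (auto simp: dep'_def lo'_def hi'_def)
    have Elt: "E l t \<longleftrightarrow> t = q" if "t \<in> T" for t using q that by blast
    have Etl: "E t l \<longleftrightarrow> t = q" if "t \<in> T" for t
      using Elt[OF that] sg(2)[OF that l(1)] sg(2)[OF l(1) that] by blast
    have core: "prel T E dep' lo' hi' t l" if t: "t \<in> T'" for t
    proof (cases "t = q")
      case True
      have "nest lo' hi' q l" unfolding nest_def lo'_def hi'_def using ql dpos d1 by simp
      moreover have "D1 T E dep' q l" unfolding D1_def dep'_def using Etl[OF q(1)] ql by simp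
      ultimately show ?thesis using True unfolding prel_def by blast
    next
      case tq: False
      have tl: "t \<noteq> l" using t lT' by blast
      have nE: "\<not> E t l" using Etl[of t] t T'T tq by blast
      have lt: "lo' t = lo t" "hi' t = hi t" "dep' t = dep t" using tl by (simp_all add: lo'_def hi'_def dep'_def)
      have ll: "lo' l = lo q + \<delta>" "hi' l = lo q + 2 * \<delta>" "dep' l = Suc (dep q)"
        by (simp_all add: lo'_def hi'_def dep'_def)
      have "prel T' E dep lo hi t q" using Dr2 t qT' tq by blast
      then consider (a) "\<not> E t q" "hi t < lo q \<or> hi q < lo t"
        | (b) "nest lo hi t q" "D1 T' E dep t q" | (c) "nest lo hi q t" "D1 T' E dep q t"
        unfolding prel_def by blast
      then show ?thesis
      proof cases
        case a
        then consider "hi t < lo q" | "hi q < lo t" by blast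
        then show ?thesis
        proof cases
          case 1 then have "hi' t < lo' l" using lt ll dpos by simp
          then show ?thesis using nE unfolding prel_def by blast
        next
          case 2
          have "lo q < lo t" using 2 Db qT' by (meson less_trans)
          then have "3 * \<delta> \<le> lo t - lo q" using d2 t by blast
          then have "hi' l < lo' t" using lt ll dpos by simp
          then show ?thesis using nE unfolding prel_def by blast
        qed
      next
        case b
        have "nest lo' hi' t l" using b(1) lt ll dpos d1 unfolding nest_def by simp
        moreover have "D1 T E dep' t l"
        proof -
          have "dep t + 1 \<le> dep q" using b(2) unfolding D1_def by auto
          moreover have "\<exists>c\<in>T. E t c \<and> dep' c = Suc (dep' t)"
          proof (cases "E t q \<and> dep q = Suc (dep t)")
            case True then show ?thesis using q(1) ql lt by (auto simp: dep'_def)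
          next
            case False
            then obtain c where "c \<in> T'" "E t c" "dep c = Suc (dep t)" using b(2) unfolding D1_def by blast
            then show ?thesis using T'T agree lt by auto
          qed
          ultimately show ?thesis unfolding D1_def using nE lt ll by auto
        qed
        ultimately show ?thesis unfolding prel_def by blast
      next
        case c
        have "lo q < lo t" using c(1) unfolding nest_def by simp
        then have "3 * \<delta> \<le> lo t - lo q" using d2 t by blast
        then have "hi' l < lo' t" using lt ll dpos by simp
        then show ?thesis using nE unfolding prel_def by blast
      qed
    qed
    have td: "tdata T E r dep' lo' hi'" unfolding tdata_def
    proof (intro conjI)
      show "dep' r = 0" using Dr l by (simp add: dep'_def)
      show "\<forall>t\<in>T. 0 < lo' t \<and> lo' t < hi' t \<and> hi' t < 1"
      proof
        fix t assume t: "t \<in> T"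
        show "0 < lo' t \<and> lo' t < hi' t \<and> hi' t < 1"
        proof (cases "t = l")
          case True
          have "0 < lo q" "hi q < 1" using Db qT' by auto
          then show ?thesis using True dpos d1 by (simp add: lo'_def hi'_def)
        next
          case False
          then have tT: "t \<in> T'" using t by (simp add: T'_def)
          then have "0 < lo t \<and> lo t < hi t \<and> hi t < 1" using Db by blast
          moreover have "lo' t = lo t" "hi' t = hi t" using agree tT by auto
          ultimately show ?thesis by simp
        qed
      qed
      show "\<forall>t\<in>T. t \<noteq> r \<longrightarrow> (\<exists>s\<in>T. E t s \<and> dep' t = Suc (dep' s))"
      proof (intro ballI impI)
        fix t assume t: "t \<in> T" "t \<noteq> r"
        show "\<exists>s\<in>T. E t s \<and> dep' t = Suc (dep' s)"
        proof (cases "t = l")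
          case True
          have "E t q \<and> dep' t = Suc (dep' q)" using True q(2) ql by (simp add: dep'_def)
          then show ?thesis using q(1) by (rule bexI)
        next
          case False
          then have tT: "t \<in> T'" using t by (simp add: T'_def)
          then obtain s where s: "s \<in> T'" "E t s" "dep t = Suc (dep s)" using Dp t(2) by blast
          have "dep' t = dep t" "dep' s = dep s" using agree tT s(1) by auto
          then have "E t s \<and> dep' t = Suc (dep' s)" using s by simp
          moreover have "s \<in> T" using s(1) T'T by blast
          ultimately show ?thesis by (rule bexI)
        qed
      qed
      show "\<forall>s\<in>T. \<forall>t\<in>T. s \<noteq> t \<longrightarrow> prel T E dep' lo' hi' s t"
      proof (intro ballI impI)
        fix s t assume st: "s \<in> T" "t \<in> T" "s \<noteq> t"
        show "prel T E dep' lo' hi' s t"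
        proof (cases "s = l")
          case True
          then have tT: "t \<in> T'" using st by (simp add: T'_def)
          have "E t l \<longleftrightarrow> E l t" using Elt[OF st(2)] Etl[OF st(2)] by blast
          from prel_sym[OF this core[OF tT]] show ?thesis using True by simp
        next
          case sl: False
          show ?thesis
          proof (cases "t = l")
            case True
            then have "s \<in> T'" using st sl by (simp add: T'_def)
            then show ?thesis using core True by blast
          next
            case False
            then have sT: "s \<in> T'" and tT: "t \<in> T'" using st sl by (simp_all add: T'_def)
            have "prel T' E dep lo hi s t" using Dr2 sT tT st(3) by blast
            then show ?thesis using prel_mono[OF _ T'T sT tT agree] by blast
          qed
        qed
      qed
    qed
    show ?thesis
      apply (rule exI[where x=dep'])
      apply (rule exI[where x=lo'])
      apply (rule exI[where x=hi'])
      by (rule td)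
  qed
qed


lemma card2: "finite A \<Longrightarrow> s \<in> A \<Longrightarrow> c \<in> A \<Longrightarrow> s \<noteq> c \<Longrightarrow> 2 \<le> card A"
proof -
  assume a: "finite A" "s \<in> A" "c \<in> A" "s \<noteq> c"
  have "card {s, c} = 2" using a(4) by simp
  moreover have "card {s, c} \<le> card A" using a by (intro card_mono) auto
  ultimately show ?thesis by simp
qed

locale chand =
  fixes T :: "'b set" and E :: "'b \<Rightarrow> 'b \<Rightarrow> bool" and r :: 'b
    and dep :: "'b \<Rightarrow> nat" and lo hi :: "'b \<Rightarrow> real"
  assumes tree: "is_tree T E" and rT: "r \<in> T" and td: "tdata T E r dep lo hi"
    and root: "is_leaf T E r \<Longrightarrow> \<forall>t\<in>T. degree T E t \<le> 1"
begin

lemma finT: "finite T" using tree_basic[OF tree] by blast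
lemma symE: "x \<in> T \<Longrightarrow> y \<in> T \<Longrightarrow> E x y \<Longrightarrow> E y x" using tree_basic(2)[OF tree] by blast
lemma irrE: "x \<in> T \<Longrightarrow> \<not> E x x" using tree_basic(3)[OF tree] by blast

lemma dep_r: "dep r = 0" using td unfolding tdata_def by blast
lemma bnds: "t \<in> T \<Longrightarrow> 0 < lo t \<and> lo t < hi t \<and> hi t < 1" using td unfolding tdata_def by blast
lemma parent: "t \<in> T \<Longrightarrow> t \<noteq> r \<Longrightarrow> \<exists>s\<in>T. E t s \<and> dep t = Suc (dep s)"
  using td unfolding tdata_def by blast
lemma prelT: "s \<in> T \<Longrightarrow> t \<in> T \<Longrightarrow> s \<noteq> t \<Longrightarrow> prel T E dep lo hi s t"
  using td unfolding tdata_def by blast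

definition small where "small \<longleftrightarrow> (\<forall>t\<in>T. degree T E t \<le> 1)"

lemma deg2:
  assumes "t \<in> T" "s \<in> T" "c \<in> T" "E t s" "E t c" "s \<noteq> c"
  shows "2 \<le> degree T E t"
  unfolding degree_def
  by (rule card2) (use assms finT in auto)

lemma leaf_child:
  assumes t: "t \<in> T" "is_leaf T E t" and c: "c \<in> T" "E t c" "dep c = Suc (dep t)"
  shows "t = r \<and> small"
proof -
  have "t = r"
  proof (rule ccontr)
    assume "t \<noteq> r"
    then obtain s where s: "s \<in> T" "E t s" "dep t = Suc (dep s)" using parent t(1) by blast
    have "dep s \<noteq> dep c" using s(3) c(3) by simp
    then have "s \<noteq> c" by blast
    then have "2 \<le> degree T E t" using deg2[OF t(1) s(1) c(1) s(2) c(2)] by simp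
    then show False using t(2) unfolding is_leaf_def by simp
  qed
  then show ?thesis using root t(2) unfolding small_def by simp
qed

lemma small_dep:
  assumes sm: small and t: "t \<in> T"
  shows "dep t \<le> 1"
proof (rule ccontr)
  assume "\<not> dep t \<le> 1"
  then have d: "2 \<le> dep t" by simp
  then have "t \<noteq> r" using dep_r by auto
  then obtain s where s: "s \<in> T" "E t s" "dep t = Suc (dep s)" using parent t by blast
  then have "s \<noteq> r" using d dep_r by auto
  then obtain s2 where s2: "s2 \<in> T" "E s s2" "dep s = Suc (dep s2)" using parent s(1) by blast
  have "E s t" using symE[OF t s(1) s(2)] .
  have "dep t \<noteq> dep s2" using s(3) s2(3) by simp
  then have "t \<noteq> s2" by blast
  then have "2 \<le> degree T E s" using deg2[OF s(1) t s2(1) \<open>E s t\<close> s2(2)] by simp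
  then show False using sm s(1) unfolding small_def by fastforce
qed

lemma small_leaf:
  assumes sm: small and t: "t \<in> T" "s \<in> T" "E t s"
  shows "is_leaf T E t"
proof -
  have "s \<in> {y\<in>T. E t y}" using t by simp
  moreover have "finite {y\<in>T. E t y}" using finT by simp
  ultimately have "1 \<le> degree T E t" unfolding degree_def by (metis One_nat_def Suc_leI card_gt_0_iff empty_iff)
  moreover have "degree T E t \<le> 1" using sm t(1) unfolding small_def by blast
  ultimately show ?thesis unfolding is_leaf_def using t(1) by simp
qed

end


locale newf = chand T E r dep lo hi
  for T :: "'b set" and E r dep lo hi +
  fixes bv dv eps :: real
  assumes eps: "0 < eps"
begin

definition "M = Max (dep ` T)"
definition "K = real M + 2"
definition "eta = eps / (K + 2)"
definition "A t = bv + eta * (real (dep t) - K)"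
definition "B t = (if is_leaf T E t then bv + eta * (real (dep t) + 1) else A t + 3/2 * eta)"
definition "C t = dv - eps + eps * lo t"
definition "D t = dv - eps + eps * hi t"
definition "NF t = (A t, B t, C t, D t)"

lemma depM: "t \<in> T \<Longrightarrow> dep t \<le> M"
  unfolding M_def using finT by simp

lemma K_pos: "2 \<le> K" unfolding K_def by simp

lemma eta_pos: "0 < eta" unfolding eta_def using eps K_pos by simp

lemma etaK: "eta * (K + 2) = eps" unfolding eta_def using K_pos by simp

lemma A_le: "t \<in> T \<Longrightarrow> A t \<le> bv - 2 * eta"
proof -
  assume t: "t \<in> T"
  have "real (dep t) \<le> real M" using depM[OF t] by simp
  then have "real (dep t) - K \<le> - 2" unfolding K_def by simp
  then have "eta * (real (dep t) - K) \<le> eta * (-2)" using eta_pos by (intro mult_left_mono) auto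
  then show ?thesis unfolding A_def by simp
qed

lemma A_gt: "bv - eps < A t"
proof -
  have "eta * (real (dep t) - K) \<ge> eta * (- K)" using eta_pos by (intro mult_left_mono) auto
  moreover have "eta * (- K) > - eps" using etaK eta_pos by (simp add: algebra_simps)
  ultimately show ?thesis unfolding A_def by simp
qed

lemma A_step: "dep t' = Suc (dep t) \<Longrightarrow> A t' = A t + eta"
  unfolding A_def by (simp add: algebra_simps)

lemma A_mono2: "dep t + 2 \<le> dep t' \<Longrightarrow> A t + 2 * eta \<le> A t'"
proof -
  assume "dep t + 2 \<le> dep t'"
  then have "real (dep t) + 2 \<le> real (dep t')" by linarith
  then have "eta * (real (dep t) + 2 - K) \<le> eta * (real (dep t') - K)" using eta_pos
    by (intro mult_left_mono) auto
  then show ?thesis unfolding A_def by (simp add: algebra_simps)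
qed

lemma B_leaf: "is_leaf T E t \<Longrightarrow> t \<in> T \<Longrightarrow> bv < B t \<and> B t < bv + eps"
proof -
  assume l: "is_leaf T E t" and t: "t \<in> T"
  have "real (dep t) \<le> real M" using depM[OF t] by simp
  then have "real (dep t) + 1 < K + 2" unfolding K_def by simp
  then have "eta * (real (dep t) + 1) < eta * (K + 2)" using eta_pos by simp
  moreover have "0 < eta * (real (dep t) + 1)" using eta_pos by simp
  ultimately show ?thesis using l etaK unfolding B_def by simp
qed

lemma B_int: "\<not> is_leaf T E t \<Longrightarrow> B t = A t + 3/2 * eta"
  unfolding B_def by simp

lemma B_int_le: "\<not> is_leaf T E t \<Longrightarrow> t \<in> T \<Longrightarrow> B t \<le> bv - eta / 2"
  using B_int A_le by force

lemma CD: "t \<in> T \<Longrightarrow> dv - eps < C t \<and> C t < D t \<and> D t < dv"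
proof -
  assume t: "t \<in> T"
  have b: "0 < lo t" "lo t < hi t" "hi t < 1" using bnds[OF t] by auto
  have "0 < eps * lo t" "eps * lo t < eps * hi t" "eps * hi t < eps" using b eps by simp_all
  then show ?thesis unfolding C_def D_def by simp
qed

lemma C_less: "lo s < lo t \<Longrightarrow> C s < C t" unfolding C_def using eps by simp
lemma D_less: "hi s < hi t \<Longrightarrow> D s < D t" unfolding D_def using eps by simp
lemma DC_less: "hi s < lo t \<Longrightarrow> D s < C t" unfolding C_def D_def using eps by simp

lemma AB: "t \<in> T \<Longrightarrow> A t < B t"
proof (cases "is_leaf T E t")
  case True
  assume t: "t \<in> T"
  then show ?thesis using A_le[OF t] B_leaf[OF True t] eta_pos by linarith
next
  case False
  then show ?thesis using B_int eta_pos by simp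
qed

lemma valid_NF: "t \<in> T \<Longrightarrow> valid_frame (NF t)"
  unfolding valid_frame_def NF_def using AB CD by simp

lemma region_NF: "t \<in> T \<Longrightarrow> (x, y) \<in> region (NF t) \<Longrightarrow> \<bar>x - bv\<bar> \<le> eps \<and> \<bar>y - dv\<bar> \<le> eps"
proof -
  assume t: "t \<in> T" and xy: "(x, y) \<in> region (NF t)"
  have h: "A t \<le> x" "x \<le> B t" "C t \<le> y" "y \<le> D t" using xy unfolding NF_def by (simp_all add: fr_simps)
  have "B t < bv + eps"
    using B_leaf[OF _ t] B_int_le[OF _ t] eta_pos eps by (cases "is_leaf T E t") force+
  then show ?thesis using h A_gt[of t] CD[OF t] by (simp add: abs_le_iff)
qed

lemma cls: "s \<in> T \<Longrightarrow> t \<in> T \<Longrightarrow> s \<noteq> t \<Longrightarrow>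
   (\<not> E s t \<and> (hi s < lo t \<or> hi t < lo s)) \<or> (nest lo hi s t \<and> D1 T E dep s t) \<or> (nest lo hi t s \<and> D1 T E dep t s)"
  using prelT unfolding prel_def by blast

lemma adj_nest:
  assumes st: "s \<in> T" "t \<in> T" "E s t" "dep t = Suc (dep s)"
  shows "nest lo hi s t"
proof -
  have ne: "s \<noteq> t" using st(4) by auto
  have Ets: "E t s" using symE[OF st(1,2,3)] .
  have "\<not> D1 T E dep t s" unfolding D1_def using st(4) Ets by auto
  then show ?thesis using cls[OF st(1,2) ne] st(3) by blast
qed

lemma NN1:
  assumes st: "s \<in> T" "t \<in> T" "E s t" "dep t = Suc (dep s)"
  shows "cross (NF s) (NF t)"
proof -
  have At: "A t = A s + eta" using A_step[OF st(4)] .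
  have n: "lo s < lo t" "hi t < hi s" using adj_nest[OF st] unfolding nest_def by auto
  have c1: "C s < C t" "D t < D s" using C_less[OF n(1)] D_less[OF n(2)] by auto
  have c2: "C t < D t" using CD[OF st(2)] by simp
  have c3: "A t < B s"
  proof (cases "is_leaf T E s")
    case True
    then show ?thesis using B_leaf[OF True st(1)] A_le[OF st(2)] eta_pos by linarith
  next
    case False
    then show ?thesis using B_int At eta_pos by simp
  qed
  have c4: "B s < B t"
  proof (cases "is_leaf T E s")
    case True
    then have "small" using leaf_child[OF st(1) True st(2,3,4)] by blast
    then have lt: "is_leaf T E t" using small_leaf symE[OF st(1,2,3)] st(1,2) by blast
    have "B s = bv + eta * (real (dep s) + 1)" "B t = bv + eta * (real (dep t) + 1)"
      using True lt unfolding B_def by simp_all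
    then show ?thesis using st(4) eta_pos by simp
  next
    case False
    have bs: "B s = A s + 3/2 * eta" using B_int[OF False] .
    show ?thesis
    proof (cases "is_leaf T E t")
      case True
      then show ?thesis using B_int_le[OF False st(1)] B_leaf[OF True st(2)] eta_pos by linarith
    next
      case False
      then show ?thesis using B_int[OF False] bs At eta_pos by simp
    qed
  qed
  have "A s < A t" using At eta_pos by simp
  then show ?thesis unfolding cross_def NF_def using c1 c2 c3 c4 by simp
qed

lemma not_leaf_of_gap:
  assumes s: "s \<in> T" and t: "t \<in> T" and D1: "D1 T E dep s t" and nE: "\<not> E s t"
  shows "\<not> is_leaf T E s \<and> dep s + 2 \<le> dep t"
proof -
  from D1 nE obtain c where c: "c \<in> T" "E s c" "dep c = Suc (dep s)" and g: "dep s + 2 \<le> dep t"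
    unfolding D1_def by blast
  have "\<not> is_leaf T E s"
  proof
    assume l: "is_leaf T E s"
    have sm: small using leaf_child[OF s l c(1,2,3)] by blast
    show False using small_dep[OF sm t] g by simp
  qed
  then show ?thesis using g by simp
qed

lemma NN2:
  assumes st: "s \<in> T" "t \<in> T" "s \<noteq> t" "\<not> E s t"
  shows "sep (NF s) (NF t)"
proof -
  have nE2: "\<not> E t s" using symE[OF st(2,1)] st(4) by blast
  have v: "valid_frame (NF s)" "valid_frame (NF t)" using valid_NF st(1,2) by auto
  have "D s < C t \<or> D t < C s \<or> B s < A t \<or> B t < A s"
  proof -
    consider (a) "hi s < lo t \<or> hi t < lo s" | (b) "nest lo hi s t" "D1 T E dep s t"
      | (c) "nest lo hi t s" "D1 T E dep t s"
      using cls[OF st(1,2,3)] by blast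
    then show ?thesis
    proof cases
      case a then show ?thesis using DC_less by blast
    next
      case b
      have g: "\<not> is_leaf T E s" "dep s + 2 \<le> dep t" using not_leaf_of_gap[OF st(1,2) b(2) st(4)] by auto
      have "B s < A t" using B_int[OF g(1)] A_mono2[OF g(2)] eta_pos by simp
      then show ?thesis by simp
    next
      case c
      have g: "\<not> is_leaf T E t" "dep t + 2 \<le> dep s" using not_leaf_of_gap[OF st(2,1) c(2) nE2] by auto
      have "B t < A s" using B_int[OF g(1)] A_mono2[OF g(2)] eta_pos by simp
      then show ?thesis by simp
    qed
  qed
  then show ?thesis using v by (intro sepI) (auto simp: NF_def)
qed

lemma pA: "t \<in> T \<Longrightarrow> (A t, C t) \<in> frame_pts (NF t)"
  unfolding NF_def using AB CD by (simp add: fr_simps less_imp_le)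
lemma pB: "t \<in> T \<Longrightarrow> (B t, C t) \<in> frame_pts (NF t)"
  unfolding NF_def using AB CD by (simp add: fr_simps less_imp_le)

lemma Q1:
  assumes st: "s \<in> T" "t \<in> T" "E s t" "dep t = Suc (dep s)" and z: "z \<in> T"
  shows "\<exists>x y. (x, y) \<in> frame_pts (NF z) \<and> (x, y) \<notin> region (NF s) \<inter> region (NF t)"
proof -
  have cr: "cross (NF s) (NF t)" using NN1[OF st] .
  then have h: "A s < A t" "A t < B s" "B s < B t" "C s < C t" "C t < D t" "D t < D s"
    unfolding cross_def NF_def by simp_all
  show ?thesis
  proof (cases "z = t")
    case True
    have "(B t, C t) \<notin> region (NF s)" using h unfolding NF_def by (simp add: fr_simps)
    then show ?thesis using pB[OF st(2)] True by blast
  next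
    case zt: False
    show ?thesis
    proof (cases "z = s")
      case True
      have "(A s, C s) \<notin> region (NF t)" using h unfolding NF_def by (simp add: fr_simps)
      then show ?thesis using pA[OF st(1)] True by blast
    next
      case zs: False
      have "(A z, C z) \<notin> region (NF s) \<inter> region (NF t)"
      proof -
        consider (a) "hi z < lo t \<or> hi t < lo z" | (b) "nest lo hi z t" | (c) "nest lo hi t z" "D1 T E dep t z"
          using cls[OF z st(2) zt] by blast
        then show ?thesis
        proof cases
          case a
          then have "C z < C t \<or> D t < C z" using DC_less CD[OF z] by fastforce
          then show ?thesis unfolding NF_def by (auto simp: fr_simps)
        next
          case b
          then have "C z < C t" using C_less unfolding nest_def by blast
          then show ?thesis unfolding NF_def by (auto simp: fr_simps)
        next
          case c
          have "dep t + 1 \<le> dep z" using c(2) unfolding D1_def by auto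
          then have g: "dep s + 2 \<le> dep z" using st(4) by simp
          have nl: "\<not> is_leaf T E s"
          proof
            assume l: "is_leaf T E s"
            have sm: small using leaf_child[OF st(1) l st(2,3,4)] by blast
            show False using small_dep[OF sm z] g by simp
          qed
          have "B s < A z" using B_int[OF nl] A_mono2[OF g] eta_pos by simp
          then show ?thesis unfolding NF_def by (auto simp: fr_simps)
        qed
      qed
      then show ?thesis using pA[OF z] by blast
    qed
  qed
qed

lemma Q2:
  assumes t: "t \<in> T" "is_leaf T E t" and z: "z \<in> T"
  shows "\<exists>x y. (x, y) \<in> frame_pts (NF z) \<and> (x, y) \<notin> region (av, bv, cv, dv) \<inter> region (NF t)"
proof (cases "is_leaf T E z")
  case True
  have "(B z, C z) \<notin> region (av, bv, cv, dv)" using B_leaf[OF True z] by (simp add: fr_simps)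
  then show ?thesis using pB[OF z] by blast
next
  case zl: False
  then have zt: "z \<noteq> t" using t(2) by blast
  have "(A z, C z) \<notin> region (NF t)"
  proof -
    consider (a) "hi z < lo t \<or> hi t < lo z" | (b) "nest lo hi z t" | (c) "nest lo hi t z" "D1 T E dep t z"
      using cls[OF z t(1) zt] by blast
    then show ?thesis
    proof cases
      case a
      then have "C z < C t \<or> D t < C z" using DC_less CD[OF z] by fastforce
      then show ?thesis unfolding NF_def by (auto simp: fr_simps)
    next
      case b
      then have "C z < C t" using C_less unfolding nest_def by blast
      then show ?thesis unfolding NF_def by (auto simp: fr_simps)
    next
      case c
      show ?thesis
      proof (cases "E t z")
        case True
        then have d: "dep z = Suc (dep t)" using c(2) unfolding D1_def by blast
        have sm: small using leaf_child[OF t z True d] by blast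
        have "is_leaf T E z" using small_leaf[OF sm z t(1)] symE[OF t(1) z True] by blast
        then show ?thesis using zl by blast
      next
        case False
        have g: "\<not> is_leaf T E t" using not_leaf_of_gap[OF t(1) z c(2) False] by blast
        then show ?thesis using t(2) by blast
      qed
    qed
  qed
  then show ?thesis using pA[OF z] by blast
qed

lemma VN_leaf:
  assumes t: "t \<in> T" "is_leaf T E t" and avb: "av + 2 * eps \<le> bv" and cvd: "cv + 2 * eps \<le> dv"
  shows "cross (av, bv, cv, dv) (NF t)"
  using A_gt[of t] A_le[OF t(1)] B_leaf[OF t(2,1)] CD[OF t(1)] eta_pos avb cvd eps
  unfolding cross_def NF_def by simp

lemma VN_int:
  assumes t: "t \<in> T" "\<not> is_leaf T E t" and avb: "av + 2 * eps \<le> bv" and cvd: "cv + 2 * eps \<le> dv"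
  shows "inside (av, bv, cv, dv) (NF t)"
  using A_gt[of t] AB[OF t(1)] B_int_le[OF t(2,1)] CD[OF t(1)] eta_pos avb cvd eps
  unfolding inside_def NF_def by simp

end


lemma snap1:
  fixes \<alpha> \<beta> e x :: real
  assumes "\<alpha> = \<beta> \<or> 2 * e \<le> \<bar>\<alpha> - \<beta>\<bar>" "0 < e" "\<bar>x - \<beta>\<bar> \<le> e"
  shows "(\<alpha> \<le> x \<longrightarrow> \<alpha> \<le> \<beta>) \<and> (x \<le> \<alpha> \<longrightarrow> \<beta> \<le> \<alpha>) \<and> (x = \<alpha> \<longrightarrow> \<beta> = \<alpha>)"
  using assms by (auto simp: abs_le_iff abs_if split: if_splits)

locale oldr =
  fixes V1 :: "'a set" and E1 :: "'a \<Rightarrow> 'a \<Rightarrow> bool" and F1 :: "'a \<Rightarrow> frame" and v :: 'a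
  assumes rep: "restricted_frame_rep V1 E1 F1" and vV: "v \<in> V1" and fin: "finite V1"
begin

lemma repc: "(\<forall>u\<in>V1. valid_frame (F1 u)) \<and>
     (\<forall>u\<in>V1. \<forall>w\<in>V1. u \<noteq> w \<longrightarrow> (E1 u w \<longleftrightarrow> frame_pts (F1 u) \<inter> frame_pts (F1 w) \<noteq> {})) \<and>
     (\<forall>u\<in>V1. \<forall>w\<in>V1. u \<noteq> w \<longrightarrow> corners (F1 u) \<inter> frame_pts (F1 w) = {}) \<and>
     (\<forall>u\<in>V1. \<forall>w\<in>V1. u \<noteq> w \<longrightarrow> left_side (F1 u) \<inter> frame_pts (F1 w) = {}) \<and>
     (\<forall>u\<in>V1. \<forall>w\<in>V1. u \<noteq> w \<longrightarrow> right_side (F1 u) \<inter> frame_pts (F1 w) \<noteq> {} \<longrightarrow>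
        right_side (F1 u) \<inter> top_side (F1 w) \<noteq> {} \<and>
        right_side (F1 u) \<inter> bottom_side (F1 w) \<noteq> {}) \<and>
     (\<forall>u\<in>V1. \<forall>w\<in>V1. \<forall>z\<in>V1. u \<noteq> w \<longrightarrow> frame_pts (F1 u) \<inter> frame_pts (F1 w) \<noteq> {} \<longrightarrow>
        \<not> frame_pts (F1 z) \<subseteq> region (F1 u) \<inter> region (F1 w))"
  using rep unfolding restricted_frame_rep_def .

lemma valid: "u \<in> V1 \<Longrightarrow> valid_frame (F1 u)"
  using repc[THEN conjunct1] by blast
lemma r0: "u \<in> V1 \<Longrightarrow> w \<in> V1 \<Longrightarrow> u \<noteq> w \<Longrightarrow> E1 u w \<longleftrightarrow> frame_pts (F1 u) \<inter> frame_pts (F1 w) \<noteq> {}"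
  using repc[THEN conjunct2, THEN conjunct1] by blast
lemma r1: "u \<in> V1 \<Longrightarrow> w \<in> V1 \<Longrightarrow> u \<noteq> w \<Longrightarrow> corners (F1 u) \<inter> frame_pts (F1 w) = {}"
  using repc[THEN conjunct2, THEN conjunct2, THEN conjunct1] by blast
lemma r2: "u \<in> V1 \<Longrightarrow> w \<in> V1 \<Longrightarrow> u \<noteq> w \<Longrightarrow> left_side (F1 u) \<inter> frame_pts (F1 w) = {}"
  using repc[THEN conjunct2, THEN conjunct2, THEN conjunct2, THEN conjunct1] by blast
lemma r3: "u \<in> V1 \<Longrightarrow> w \<in> V1 \<Longrightarrow> u \<noteq> w \<Longrightarrow> right_side (F1 u) \<inter> frame_pts (F1 w) \<noteq> {} \<Longrightarrow>
    right_side (F1 u) \<inter> top_side (F1 w) \<noteq> {} \<and> right_side (F1 u) \<inter> bottom_side (F1 w) \<noteq> {}"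
proof -
  assume a: "u \<in> V1" "w \<in> V1" "u \<noteq> w" "right_side (F1 u) \<inter> frame_pts (F1 w) \<noteq> {}"
  have "\<forall>u\<in>V1. \<forall>w\<in>V1. u \<noteq> w \<longrightarrow> right_side (F1 u) \<inter> frame_pts (F1 w) \<noteq> {} \<longrightarrow>
        right_side (F1 u) \<inter> top_side (F1 w) \<noteq> {} \<and> right_side (F1 u) \<inter> bottom_side (F1 w) \<noteq> {}"
    using repc[THEN conjunct2, THEN conjunct2, THEN conjunct2, THEN conjunct2, THEN conjunct1] .
  then show ?thesis using a by blast
qed
lemma r4: "u \<in> V1 \<Longrightarrow> w \<in> V1 \<Longrightarrow> z \<in> V1 \<Longrightarrow> u \<noteq> w \<Longrightarrow> frame_pts (F1 u) \<inter> frame_pts (F1 w) \<noteq> {} \<Longrightarrow>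
    \<not> frame_pts (F1 z) \<subseteq> region (F1 u) \<inter> region (F1 w)"
proof -
  assume a: "u \<in> V1" "w \<in> V1" "z \<in> V1" "u \<noteq> w" "frame_pts (F1 u) \<inter> frame_pts (F1 w) \<noteq> {}"
  have "\<forall>u\<in>V1. \<forall>w\<in>V1. \<forall>z\<in>V1. u \<noteq> w \<longrightarrow> frame_pts (F1 u) \<inter> frame_pts (F1 w) \<noteq> {} \<longrightarrow>
        \<not> frame_pts (F1 z) \<subseteq> region (F1 u) \<inter> region (F1 w)"
    using repc[THEN conjunct2, THEN conjunct2, THEN conjunct2, THEN conjunct2, THEN conjunct2] .
  then show ?thesis using a by blast
qed

definition "av = fst (F1 v)"
definition "bv = fst (snd (F1 v))"
definition "cv = fst (snd (snd (F1 v)))"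
definition "dv = snd (snd (snd (F1 v)))"

lemma Fv: "F1 v = (av, bv, cv, dv)" by (simp add: av_def bv_def cv_def dv_def)

lemma vv: "av < bv" "cv < dv" using valid[OF vV] unfolding Fv valid_frame_def by auto

definition "xset = (\<lambda>w. fst (F1 w)) ` V1 \<union> (\<lambda>w. fst (snd (F1 w))) ` V1"
definition "yset = (\<lambda>w. fst (snd (snd (F1 w)))) ` V1 \<union> (\<lambda>w. snd (snd (snd (F1 w)))) ` V1"
definition "S = ((\<lambda>a. \<bar>a - bv\<bar>) ` xset \<union> (\<lambda>c. \<bar>c - dv\<bar>) ` yset) - {0}"
definition "eps = Min S / 2"

lemma finS: "finite S" unfolding S_def xset_def yset_def using fin by simp

lemma avS: "\<bar>av - bv\<bar> \<in> S"
proof -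
  have "av \<in> xset" unfolding xset_def using vV by (auto simp: av_def)
  moreover have "\<bar>av - bv\<bar> \<noteq> 0" using vv by simp
  ultimately show ?thesis unfolding S_def by blast
qed

lemma Spos: "x \<in> S \<Longrightarrow> 0 < x" unfolding S_def by auto

lemma eps_pos: "0 < eps"
proof -
  have "S \<noteq> {}" using avS by blast
  then have "0 < Min S" using Min_gr_iff[OF finS] Spos by blast
  then show ?thesis unfolding eps_def by simp
qed

lemma snapx: "a \<in> xset \<Longrightarrow> a = bv \<or> 2 * eps \<le> \<bar>a - bv\<bar>"
proof -
  assume a: "a \<in> xset"
  show ?thesis
  proof (cases "a = bv")
    case False
    then have "\<bar>a - bv\<bar> \<in> S" unfolding S_def using a by auto
    then have "Min S \<le> \<bar>a - bv\<bar>" using Min_le[OF finS] by blast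
    then show ?thesis unfolding eps_def by simp
  qed simp
qed

lemma snapy: "c \<in> yset \<Longrightarrow> c = dv \<or> 2 * eps \<le> \<bar>c - dv\<bar>"
proof -
  assume a: "c \<in> yset"
  show ?thesis
  proof (cases "c = dv")
    case False
    then have "\<bar>c - dv\<bar> \<in> S" unfolding S_def using a by auto
    then have "Min S \<le> \<bar>c - dv\<bar>" using Min_le[OF finS] by blast
    then show ?thesis unfolding eps_def by simp
  qed simp
qed

lemma coords_in:
  assumes "w \<in> V1" "F1 w = (a, b, c, d)"
  shows "a \<in> xset" "b \<in> xset" "c \<in> yset" "d \<in> yset"
  unfolding xset_def yset_def using assms by (auto intro!: image_eqI[where x=w])

lemma eps_v: "av + 2 * eps \<le> bv" "cv + 2 * eps \<le> dv"
proof -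
  have "av = bv \<or> 2 * eps \<le> \<bar>av - bv\<bar>" using snapx coords_in(1)[OF vV Fv] by blast
  then show "av + 2 * eps \<le> bv" using vv by auto
  have "cv = dv \<or> 2 * eps \<le> \<bar>cv - dv\<bar>" using snapy coords_in(3)[OF vV Fv] by blast
  then show "cv + 2 * eps \<le> dv" using vv by auto
qed

lemma near_snap:
  assumes w: "w \<in> V1" "F1 w = (a, b, c, d)" and x: "\<bar>x - bv\<bar> \<le> eps" and y: "\<bar>y - dv\<bar> \<le> eps"
  shows "(a \<le> x \<longrightarrow> a \<le> bv) \<and> (x \<le> a \<longrightarrow> bv \<le> a) \<and> (x = a \<longrightarrow> bv = a)"
    "(b \<le> x \<longrightarrow> b \<le> bv) \<and> (x \<le> b \<longrightarrow> bv \<le> b) \<and> (x = b \<longrightarrow> bv = b)"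
    "(c \<le> y \<longrightarrow> c \<le> dv) \<and> (y \<le> c \<longrightarrow> dv \<le> c) \<and> (y = c \<longrightarrow> dv = c)"
    "(d \<le> y \<longrightarrow> d \<le> dv) \<and> (y \<le> d \<longrightarrow> dv \<le> d) \<and> (y = d \<longrightarrow> dv = d)"
  by (rule snap1[OF snapx[OF coords_in(1)[OF w]] eps_pos x],
      rule snap1[OF snapx[OF coords_in(2)[OF w]] eps_pos x],
      rule snap1[OF snapy[OF coords_in(3)[OF w]] eps_pos y],
      rule snap1[OF snapy[OF coords_in(4)[OF w]] eps_pos y])

lemma near_frame:
  assumes w: "w \<in> V1" and x: "\<bar>x - bv\<bar> \<le> eps" and y: "\<bar>y - dv\<bar> \<le> eps"
    and xy: "(x, y) \<in> frame_pts (F1 w)"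
  shows "(bv, dv) \<in> frame_pts (F1 w)"
proof -
  obtain a b c d where F: "F1 w = (a, b, c, d)" by (cases "F1 w") auto
  note s = near_snap[OF w F x y]
  have s1: "a \<le> x \<Longrightarrow> a \<le> bv" "x \<le> a \<Longrightarrow> bv \<le> a" "x = a \<Longrightarrow> bv = a" using s(1) by blast+
  have s2: "b \<le> x \<Longrightarrow> b \<le> bv" "x \<le> b \<Longrightarrow> bv \<le> b" "x = b \<Longrightarrow> bv = b" using s(2) by blast+
  have s3: "c \<le> y \<Longrightarrow> c \<le> dv" "y \<le> c \<Longrightarrow> dv \<le> c" "y = c \<Longrightarrow> dv = c" using s(3) by blast+
  have s4: "d \<le> y \<Longrightarrow> d \<le> dv" "y \<le> d \<Longrightarrow> dv \<le> d" "y = d \<Longrightarrow> dv = d" using s(4) by blast+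
  have h: "((x = a \<or> x = b) \<and> c \<le> y \<and> y \<le> d) \<or> ((y = c \<or> y = d) \<and> a \<le> x \<and> x \<le> b)"
    using xy unfolding F mem_frame_pts .
  show ?thesis
  proof (cases "(x = a \<or> x = b) \<and> c \<le> y \<and> y \<le> d")
    case True
    then have "c \<le> dv" "dv \<le> d" using s3(1) s4(2) by blast+
    moreover have "bv = a \<or> bv = b" using True s1(3) s2(3) by blast
    ultimately show ?thesis unfolding F mem_frame_pts by blast
  next
    case False
    then have h2: "(y = c \<or> y = d) \<and> a \<le> x \<and> x \<le> b" using h by blast
    then have "a \<le> bv" "bv \<le> b" using s1(1) s2(2) by blast+
    moreover have "dv = c \<or> dv = d" using h2 s3(3) s4(3) by blast
    ultimately show ?thesis unfolding F mem_frame_pts by blast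
  qed
qed

lemma near_region:
  assumes w: "w \<in> V1" and x: "\<bar>x - bv\<bar> \<le> eps" and y: "\<bar>y - dv\<bar> \<le> eps"
    and xy: "(x, y) \<in> region (F1 w)"
  shows "(bv, dv) \<in> region (F1 w)"
proof -
  obtain a b c d where F: "F1 w = (a, b, c, d)" by (cases "F1 w") auto
  note s = near_snap[OF w F x y]
  have s1: "a \<le> x \<Longrightarrow> a \<le> bv" using s(1) by blast
  have s2: "x \<le> b \<Longrightarrow> bv \<le> b" using s(2) by blast
  have s3: "c \<le> y \<Longrightarrow> c \<le> dv" using s(3) by blast
  have s4: "y \<le> d \<Longrightarrow> dv \<le> d" using s(4) by blast
  have "a \<le> x" "x \<le> b" "c \<le> y" "y \<le> d" using xy unfolding F mem_region by blast+
  then show ?thesis using s1 s2 s3 s4 unfolding F mem_region by blast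
qed

lemma corner_not: "w \<in> V1 \<Longrightarrow> w \<noteq> v \<Longrightarrow> (bv, dv) \<notin> frame_pts (F1 w)"
proof -
  assume w: "w \<in> V1" "w \<noteq> v"
  have "(bv, dv) \<in> corners (F1 v)" unfolding Fv by (simp add: fr_simps)
  then show ?thesis using r1[OF vV w(1)] w(2) by blast
qed

lemma G1: "w \<in> V1 \<Longrightarrow> w \<noteq> v \<Longrightarrow> (x, y) \<in> frame_pts (F1 w) \<Longrightarrow> \<bar>x - bv\<bar> \<le> eps \<Longrightarrow> \<bar>y - dv\<bar> \<le> eps \<Longrightarrow> False"
  using near_frame corner_not by blast

lemma cornerB:
  assumes w: "w \<in> V1" "w \<noteq> v" and int: "frame_pts (F1 v) \<inter> frame_pts (F1 w) \<noteq> {}"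
  shows "(bv, dv) \<notin> region (F1 w)"
proof
  assume cin: "(bv, dv) \<in> region (F1 w)"
  obtain a b c d where F: "F1 w = (a, b, c, d)" by (cases "F1 w") auto
  have wv: "v \<noteq> w" using w(2) by blast
  have ci: "a \<le> bv" "bv \<le> b" "c \<le> dv" "dv \<le> d" using cin unfolding F by (simp_all add: fr_simps)
  have cn: "(bv, dv) \<notin> frame_pts (a, b, c, d)" using corner_not[OF w] F by simp
  show False
  proof (cases "right_side (F1 v) \<inter> frame_pts (F1 w) \<noteq> {}")
    case True
    then have "right_side (F1 v) \<inter> top_side (F1 w) \<noteq> {}" using r3[OF vV w(1) wv] by blast
    then obtain x y where "(x, y) \<in> right_side (av, bv, cv, dv)" "(x, y) \<in> top_side (a, b, c, d)"
      unfolding Fv F by auto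
    then have "x = bv" "y \<le> dv" "y = d" by (simp_all add: fr_simps)
    then have "d = dv" using ci by simp
    then show False using cn ci by (simp add: fr_simps)
  next
    case nr1: False
    show False
    proof (cases "right_side (F1 w) \<inter> frame_pts (F1 v) \<noteq> {}")
      case True
      then have "right_side (F1 w) \<inter> top_side (F1 v) \<noteq> {}" using r3[OF w(1) vV w(2)] by blast
      then obtain x y where "(x, y) \<in> right_side (a, b, c, d)" "(x, y) \<in> top_side (av, bv, cv, dv)"
        unfolding Fv F by auto
      then have "x = b" "x \<le> bv" by (simp_all add: fr_simps)
      then have "b = bv" using ci by simp
      then show False using cn ci by (simp add: fr_simps)
    next
      case nr2: False
      obtain x y where xy: "(x, y) \<in> frame_pts (av, bv, cv, dv)" "(x, y) \<in> frame_pts (a, b, c, d)"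
        using int unfolding Fv F by auto
      have l1: "(x, y) \<notin> left_side (av, bv, cv, dv)" using r2[OF vV w(1) wv] xy(2) unfolding Fv F by blast
      have l2: "(x, y) \<notin> left_side (a, b, c, d)" using r2[OF w(1) vV w(2)] xy(1) unfolding Fv F by blast
      have l3: "(x, y) \<notin> right_side (av, bv, cv, dv)" using nr1 xy(2) unfolding Fv F by blast
      have l4: "(x, y) \<notin> right_side (a, b, c, d)" using nr2 xy(1) unfolding Fv F by blast
      have h1: "y = cv \<or> y = dv" "av \<le> x" "x \<le> bv" using xy(1) l1 l3 by (auto simp: fr_simps)
      have h2: "y = c \<or> y = d" "a \<le> x" "x \<le> b" using xy(2) l2 l4 by (auto simp: fr_simps)
      show False
      proof (cases "a \<le> av")
        case True
        have "(av, y) \<in> corners (F1 v)" using h1 unfolding Fv by (auto simp: fr_simps)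
        moreover have "(av, y) \<in> frame_pts (F1 w)" using h1 h2 True unfolding F by (auto simp: fr_simps)
        ultimately show False using r1[OF vV w(1) wv] by blast
      next
        case False
        have "(a, y) \<in> corners (F1 w)" using h2 unfolding F by (auto simp: fr_simps)
        moreover have "(a, y) \<in> frame_pts (F1 v)" using h1 h2 False unfolding Fv by (auto simp: fr_simps)
        ultimately show False using r1[OF w(1) vV w(2)] by blast
      qed
    qed
  qed
qed

lemma cornerA1:
  assumes u: "u \<in> V1" "u \<noteq> v" and cin: "(bv, dv) \<in> region (F1 u)" and lt: "av < fst (F1 u)"
  shows False
proof -
  obtain a b c d where F: "F1 u = (a, b, c, d)" by (cases "F1 u") auto
  have ci: "a \<le> bv" "bv \<le> b" "c \<le> dv" "dv \<le> d" using cin unfolding F by (simp_all add: fr_simps)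
  have "(a, dv) \<in> left_side (F1 u)" using ci unfolding F by (simp add: fr_simps)
  moreover have "(a, dv) \<in> frame_pts (F1 v)" using ci lt unfolding Fv F by (simp add: fr_simps)
  ultimately show False using r2[OF u(1) vV u(2)] by blast
qed

lemma cornerA2:
  assumes u: "u \<in> V1" "u \<noteq> v" and cin: "(bv, dv) \<in> region (F1 u)" and lt: "cv < fst (snd (snd (F1 u)))"
  shows False
proof -
  obtain a b c d where F: "F1 u = (a, b, c, d)" by (cases "F1 u") auto
  have uv: "v \<noteq> u" using u(2) by blast
  have ci: "a \<le> bv" "bv \<le> b" "c \<le> dv" "dv \<le> d" using cin unfolding F by (simp_all add: fr_simps)
  have "(bv, c) \<in> right_side (F1 v)" using ci lt unfolding Fv F by (simp add: fr_simps)
  moreover have "(bv, c) \<in> frame_pts (F1 u)" using ci unfolding F by (simp add: fr_simps)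
  ultimately have "right_side (F1 v) \<inter> frame_pts (F1 u) \<noteq> {}" by blast
  then have "right_side (F1 v) \<inter> top_side (F1 u) \<noteq> {}" using r3[OF vV u(1) uv] by blast
  then obtain x y where "(x, y) \<in> right_side (av, bv, cv, dv)" "(x, y) \<in> top_side (a, b, c, d)"
    unfolding Fv F by auto
  then have "x = bv" "y \<le> dv" "y = d" by (simp_all add: fr_simps)
  then have "d = dv" using ci by simp
  then have "(bv, dv) \<in> frame_pts (F1 u)" using ci unfolding F by (simp add: fr_simps)
  then show False using corner_not[OF u] by blast
qed

lemma cornerA:
  assumes uw: "u \<in> V1" "w \<in> V1" "u \<noteq> w" "u \<noteq> v" "w \<noteq> v"
    and int: "frame_pts (F1 u) \<inter> frame_pts (F1 w) \<noteq> {}"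
  shows "(bv, dv) \<notin> region (F1 u) \<inter> region (F1 w)"
proof
  assume cin: "(bv, dv) \<in> region (F1 u) \<inter> region (F1 w)"
  obtain a b c d where F: "F1 u = (a, b, c, d)" by (cases "F1 u") auto
  obtain a' b' c' d' where G: "F1 w = (a', b', c', d')" by (cases "F1 w") auto
  have ci: "a \<le> bv" "bv \<le> b" "c \<le> dv" "dv \<le> d" "a' \<le> bv" "bv \<le> b'" "c' \<le> dv" "dv \<le> d'"
    using cin unfolding F G by (simp_all add: fr_simps)
  obtain x y where xy: "(x, y) \<in> frame_pts (F1 v)" "(x, y) \<notin> region (F1 u) \<inter> region (F1 w)"
    using r4[OF uw(1,2) vV uw(3) int] by auto
  have "(x, y) \<in> region (F1 v)" using xy(1) frame_sub_region[OF valid[OF vV]] by blast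
  then have xr: "av \<le> x" "x \<le> bv" "cv \<le> y" "y \<le> dv" unfolding Fv by (simp_all add: fr_simps)
  have "x < a \<or> y < c \<or> x < a' \<or> y < c'" using xy(2) xr ci unfolding F G by (auto simp: fr_simps)
  then have "av < a \<or> cv < c \<or> av < a' \<or> cv < c'" using xr by auto
  then show False
    using cornerA1[OF uw(1,4)] cornerA2[OF uw(1,4)] cornerA1[OF uw(2,5)] cornerA2[OF uw(2,5)] cin F G
    by auto
qed

lemma corner_pair:
  assumes uw: "u \<in> V1" "w \<in> V1" "u \<noteq> w" and int: "frame_pts (F1 u) \<inter> frame_pts (F1 w) \<noteq> {}"
  shows "(bv, dv) \<notin> region (F1 u) \<inter> region (F1 w)"
proof (cases "u = v")
  case True
  then have "w \<noteq> v" using uw(3) by blast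
  then show ?thesis using cornerB[OF uw(2)] int True by blast
next
  case uv: False
  show ?thesis
  proof (cases "w = v")
    case True
    have "frame_pts (F1 v) \<inter> frame_pts (F1 u) \<noteq> {}" using int True by blast
    then show ?thesis using cornerB[OF uw(1) uv] True by blast
  next
    case False
    then show ?thesis using cornerA[OF uw uv False int] by blast
  qed
qed

lemma G2:
  assumes uw: "u \<in> V1" "w \<in> V1" "u \<noteq> w" and int: "frame_pts (F1 u) \<inter> frame_pts (F1 w) \<noteq> {}"
    and xy: "(x, y) \<in> region (F1 u) \<inter> region (F1 w)" "\<bar>x - bv\<bar> \<le> eps" "\<bar>y - dv\<bar> \<le> eps"
  shows False
  using near_region[OF uw(1) xy(2,3)] near_region[OF uw(2) xy(2,3)] xy(1) corner_pair[OF uw int] by blast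

end


lemma rep_intro:
  assumes v: "\<forall>u\<in>V. valid_frame (F u)"
    and e: "\<And>u w. u \<in> V \<Longrightarrow> w \<in> V \<Longrightarrow> u \<noteq> w \<Longrightarrow> (E u w \<longleftrightarrow> frame_pts (F u) \<inter> frame_pts (F w) \<noteq> {}) \<and> goodp (F u) (F w)"
    and f: "\<And>u w z. u \<in> V \<Longrightarrow> w \<in> V \<Longrightarrow> z \<in> V \<Longrightarrow> u \<noteq> w \<Longrightarrow> frame_pts (F u) \<inter> frame_pts (F w) \<noteq> {} \<Longrightarrow>
          \<not> frame_pts (F z) \<subseteq> region (F u) \<inter> region (F w)"
  shows "restricted_frame_rep V E F"
  unfolding restricted_frame_rep_def
proof (intro conjI)
  show "\<forall>u\<in>V. valid_frame (F u)" by (rule v)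
  show "\<forall>u\<in>V. \<forall>w\<in>V. u \<noteq> w \<longrightarrow> E u w = (frame_pts (F u) \<inter> frame_pts (F w) \<noteq> {})"
    using e by blast
  show "\<forall>u\<in>V. \<forall>w\<in>V. u \<noteq> w \<longrightarrow> corners (F u) \<inter> frame_pts (F w) = {}"
    using e unfolding goodp_def by blast
  show "\<forall>u\<in>V. \<forall>w\<in>V. u \<noteq> w \<longrightarrow> left_side (F u) \<inter> frame_pts (F w) = {}"
    using e unfolding goodp_def by blast
  show "\<forall>u\<in>V. \<forall>w\<in>V. u \<noteq> w \<longrightarrow> right_side (F u) \<inter> frame_pts (F w) \<noteq> {} \<longrightarrow>
        right_side (F u) \<inter> top_side (F w) \<noteq> {} \<and> right_side (F u) \<inter> bottom_side (F w) \<noteq> {}"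
  proof (intro ballI impI)
    fix u w assume a: "u \<in> V" "w \<in> V" "u \<noteq> w" "right_side (F u) \<inter> frame_pts (F w) \<noteq> {}"
    have "goodp (F u) (F w)" using e[OF a(1,2,3)] by blast
    then show "right_side (F u) \<inter> top_side (F w) \<noteq> {} \<and> right_side (F u) \<inter> bottom_side (F w) \<noteq> {}"
      using a(4) unfolding goodp_def by blast
  qed
  show "\<forall>u\<in>V. \<forall>w\<in>V. \<forall>z\<in>V. u \<noteq> w \<longrightarrow> frame_pts (F u) \<inter> frame_pts (F w) \<noteq> {} \<longrightarrow>
        \<not> frame_pts (F z) \<subseteq> region (F u) \<inter> region (F w)"
    using f by blast
qed

locale glue = oldr V1 E1 F1 v for V1 :: "'a set" and E1 F1 v +
  fixes T :: "'b set" and E2 r dep lo hi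
  assumes ch: "chand T E2 r dep lo hi"
begin

sublocale N: newf T E2 r dep lo hi bv dv eps
  using ch eps_pos by (simp add: newf_def newf_axioms_def)

definition GE :: "'a + 'b \<Rightarrow> 'a + 'b \<Rightarrow> bool" where
  "GE X Y = (case X of Inl a \<Rightarrow> (case Y of Inl b \<Rightarrow> E1 a b | Inr t \<Rightarrow> a = v \<and> is_leaf T E2 t)
     | Inr s \<Rightarrow> (case Y of Inl b \<Rightarrow> b = v \<and> is_leaf T E2 s | Inr t \<Rightarrow> E2 s t))"

definition FF :: "'a + 'b \<Rightarrow> frame" where "FF = case_sum F1 N.NF"

lemma FF_simps [simp]: "FF (Inl a) = F1 a" "FF (Inr t) = N.NF t" by (simp_all add: FF_def)
lemma GE_simps [simp]: "GE (Inl a) (Inl b) = E1 a b" "GE (Inl a) (Inr t) = (a = v \<and> is_leaf T E2 t)"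
  "GE (Inr s) (Inl b) = (b = v \<and> is_leaf T E2 s)" "GE (Inr s) (Inr t) = E2 s t"
  by (simp_all add: GE_def)

lemma old_new_disj:
  assumes a: "a \<in> V1" "a \<noteq> v" and t: "t \<in> T"
  shows "frame_pts (F1 a) \<inter> region (N.NF t) = {}"
proof (rule ccontr)
  assume "frame_pts (F1 a) \<inter> region (N.NF t) \<noteq> {}"
  then obtain x y where xy: "(x, y) \<in> frame_pts (F1 a)" "(x, y) \<in> region (N.NF t)" by auto
  have "\<bar>x - bv\<bar> \<le> eps \<and> \<bar>y - dv\<bar> \<le> eps" using N.region_NF[OF t xy(2)] .
  then show False using G1[OF a xy(1)] by blast
qed

lemma frame_nonempty: "valid_frame F \<Longrightarrow> \<exists>x y. (x, y) \<in> frame_pts F"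
proof -
  assume "valid_frame F"
  obtain a b c d where F: "F = (a, b, c, d)" by (cases F) auto
  have "(a, c) \<in> frame_pts F" using \<open>valid_frame F\<close> unfolding F valid_frame_def by (simp add: fr_simps)
  then show ?thesis by blast
qed

lemma old_pt_out:
  assumes c: "c \<in> V1" and t: "t \<in> T"
  shows "\<exists>x y. (x, y) \<in> frame_pts (F1 c) \<and> (x, y) \<notin> region (N.NF t)"
proof (cases "c = v")
  case True
  have "(av, cv) \<in> frame_pts (F1 v)" unfolding Fv using vv by (simp add: fr_simps)
  moreover have "(av, cv) \<notin> region (N.NF t)"
    using N.A_gt[of t] eps_v eps_pos unfolding N.NF_def by (simp add: fr_simps)
  ultimately show ?thesis using True by blast
next
  case False
  obtain x y where "(x, y) \<in> frame_pts (F1 c)" using frame_nonempty valid[OF c] by blast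
  then show ?thesis using old_new_disj[OF c False t] by blast
qed

lemma new_pt_out:
  assumes t: "t \<in> T" and uw: "u \<in> V1" "w \<in> V1" "u \<noteq> w" and int: "frame_pts (F1 u) \<inter> frame_pts (F1 w) \<noteq> {}"
  shows "\<exists>x y. (x, y) \<in> frame_pts (N.NF t) \<and> (x, y) \<notin> region (F1 u) \<inter> region (F1 w)"
proof -
  have p: "(N.A t, N.C t) \<in> frame_pts (N.NF t)" using N.pA[OF t] .
  have "(N.A t, N.C t) \<in> region (N.NF t)" using p frame_sub_region[OF N.valid_NF[OF t]] by blast
  then have near: "\<bar>N.A t - bv\<bar> \<le> eps" "\<bar>N.C t - dv\<bar> \<le> eps" using N.region_NF[OF t] by blast+
  have "(N.A t, N.C t) \<notin> region (F1 u) \<inter> region (F1 w)"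
    using G2[OF uw int _ near] by blast
  then show ?thesis using p by blast
qed

lemma adj_dep:
  assumes st: "s \<in> T" "t \<in> T" "s \<noteq> t" "E2 s t"
  shows "dep t = Suc (dep s) \<or> dep s = Suc (dep t)"
proof -
  have ts: "E2 t s" using N.symE[OF st(1,2,4)] .
  from N.cls[OF st(1,2,3)] consider "nest lo hi s t" "D1 T E2 dep s t" | "nest lo hi t s" "D1 T E2 dep t s"
    using st(4) by blast
  then show ?thesis
  proof cases
    case 1 then show ?thesis using st(4) unfolding D1_def by blast
  next
    case 2 then show ?thesis using ts unfolding D1_def by blast
  qed
qed

lemma newnew_pair:
  assumes st: "s \<in> T" "t \<in> T" "s \<noteq> t"
  shows "(E2 s t \<longleftrightarrow> frame_pts (N.NF s) \<inter> frame_pts (N.NF t) \<noteq> {}) \<and> goodp (N.NF s) (N.NF t)"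
proof (cases "E2 s t")
  case True
  have ts: "E2 t s" using N.symE[OF st(1,2) True] .
  from adj_dep[OF st True] show ?thesis
  proof
    assume d: "dep t = Suc (dep s)"
    have "cross (N.NF s) (N.NF t)" using N.NN1[OF st(1,2) True d] .
    then show ?thesis using cross_props True by blast
  next
    assume d: "dep s = Suc (dep t)"
    have c: "cross (N.NF t) (N.NF s)" using N.NN1[OF st(2,1) ts d] .
    have "frame_pts (N.NF s) \<inter> frame_pts (N.NF t) \<noteq> {}" using cross_props(1)[OF c] by blast
    then show ?thesis using cross_props(3)[OF c] True by blast
  qed
next
  case False
  have "sep (N.NF s) (N.NF t)" using N.NN2[OF st False] .
  then show ?thesis using sep_props False by blast
qed

lemma oldnew_pair:
  assumes a: "a \<in> V1" and t: "t \<in> T"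
  shows "((a = v \<and> is_leaf T E2 t) \<longleftrightarrow> frame_pts (F1 a) \<inter> frame_pts (N.NF t) \<noteq> {}) \<and>
    goodp (F1 a) (N.NF t) \<and> goodp (N.NF t) (F1 a)"
proof (cases "a = v")
  case True
  show ?thesis
  proof (cases "is_leaf T E2 t")
    case l: True
    have "cross (F1 v) (N.NF t)" unfolding Fv using N.VN_leaf[OF t l eps_v] .
    then show ?thesis using cross_props True l by blast
  next
    case l: False
    have "inside (F1 v) (N.NF t)" unfolding Fv using N.VN_int[OF t l eps_v] .
    then show ?thesis using inside_props True l by blast
  qed
next
  case False
  have d: "frame_pts (F1 a) \<inter> frame_pts (N.NF t) = {}"
    using old_new_disj[OF a False t] frame_sub_region[OF N.valid_NF[OF t]] by blast
  have "goodp (F1 a) (N.NF t)" using disj_good[OF valid[OF a] d] .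
  moreover have "goodp (N.NF t) (F1 a)" using disj_good[OF N.valid_NF[OF t]] d by (simp add: Int_commute)
  ultimately show ?thesis using d False by blast
qed

lemma pairs:
  assumes X: "X \<in> Inl ` V1 \<union> Inr ` T" and Y: "Y \<in> Inl ` V1 \<union> Inr ` T" and ne: "X \<noteq> Y"
  shows "(GE X Y \<longleftrightarrow> frame_pts (FF X) \<inter> frame_pts (FF Y) \<noteq> {}) \<and> goodp (FF X) (FF Y)"
proof -
  consider (ll) a b where "X = Inl a" "Y = Inl b" "a \<in> V1" "b \<in> V1"
    | (lr) a t where "X = Inl a" "Y = Inr t" "a \<in> V1" "t \<in> T"
    | (rl) t a where "X = Inr t" "Y = Inl a" "a \<in> V1" "t \<in> T"
    | (rr) s t where "X = Inr s" "Y = Inr t" "s \<in> T" "t \<in> T"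
    using X Y by blast
  then show ?thesis
  proof cases
    case ll
    then have ab: "a \<noteq> b" using ne by blast
    have "goodp (F1 a) (F1 b)" unfolding goodp_def using r1[OF ll(3,4) ab] r2[OF ll(3,4) ab] r3[OF ll(3,4) ab] by blast
    then show ?thesis using ll r0[OF ll(3,4) ab] by simp
  next
    case lr
    then show ?thesis using oldnew_pair[OF lr(3,4)] by simp
  next
    case rl
    have "frame_pts (N.NF t) \<inter> frame_pts (F1 a) = frame_pts (F1 a) \<inter> frame_pts (N.NF t)" by blast
    then show ?thesis using rl oldnew_pair[OF rl(3,4)] by simp
  next
    case rr
    then have st: "s \<noteq> t" using ne by blast
    then show ?thesis using rr newnew_pair[OF rr(3,4) st] by simp
  qed
qed

lemma notsub: "\<exists>x y. (x, y) \<in> P \<and> (x, y) \<notin> Q \<Longrightarrow> \<not> P \<subseteq> Q" by blast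

lemma four_lr:
  assumes a: "a \<in> V1" and t: "t \<in> T" and int: "frame_pts (F1 a) \<inter> frame_pts (N.NF t) \<noteq> {}"
    and Z: "Z \<in> Inl ` V1 \<union> Inr ` T"
  shows "\<not> frame_pts (FF Z) \<subseteq> region (F1 a) \<inter> region (N.NF t)"
proof -
  have av: "a = v" and l: "is_leaf T E2 t" using oldnew_pair[OF a t] int by blast+
  consider (l) c where "Z = Inl c" "c \<in> V1" | (r) z where "Z = Inr z" "z \<in> T" using Z by blast
  then show ?thesis
  proof cases
    case l
    then show ?thesis using old_pt_out[OF l(2) t] by (intro notsub) auto
  next
    case r
    have "\<exists>x y. (x, y) \<in> frame_pts (N.NF z) \<and> (x, y) \<notin> region (av, bv, cv, dv) \<inter> region (N.NF t)"
      using N.Q2[OF t l r(2)] .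
    then show ?thesis using r av by (intro notsub) (simp add: Fv)
  qed
qed

lemma four_rr:
  assumes st: "s \<in> T" "t \<in> T" "E2 s t" "dep t = Suc (dep s)"
    and Z: "Z \<in> Inl ` V1 \<union> Inr ` T"
  shows "\<not> frame_pts (FF Z) \<subseteq> region (N.NF s) \<inter> region (N.NF t)"
proof -
  consider (l) c where "Z = Inl c" "c \<in> V1" | (r) z where "Z = Inr z" "z \<in> T" using Z by blast
  then show ?thesis
  proof cases
    case l
    then show ?thesis using old_pt_out[OF l(2) st(1)] by (intro notsub) auto
  next
    case r
    then show ?thesis using N.Q1[OF st r(2)] by (intro notsub) simp
  qed
qed

lemma four:
  assumes X: "X \<in> Inl ` V1 \<union> Inr ` T" and Y: "Y \<in> Inl ` V1 \<union> Inr ` T"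
    and Z: "Z \<in> Inl ` V1 \<union> Inr ` T" and ne: "X \<noteq> Y"
    and int: "frame_pts (FF X) \<inter> frame_pts (FF Y) \<noteq> {}"
  shows "\<not> frame_pts (FF Z) \<subseteq> region (FF X) \<inter> region (FF Y)"
proof -
  consider (ll) a b where "X = Inl a" "Y = Inl b" "a \<in> V1" "b \<in> V1"
    | (lr) a t where "X = Inl a" "Y = Inr t" "a \<in> V1" "t \<in> T"
    | (rl) t a where "X = Inr t" "Y = Inl a" "a \<in> V1" "t \<in> T"
    | (rr) s t where "X = Inr s" "Y = Inr t" "s \<in> T" "t \<in> T"
    using X Y by blast
  then show ?thesis
  proof cases
    case ll
    then have ab: "a \<noteq> b" using ne by blast
    have i: "frame_pts (F1 a) \<inter> frame_pts (F1 b) \<noteq> {}" using int ll by simp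
    consider (l) c where "Z = Inl c" "c \<in> V1" | (r) z where "Z = Inr z" "z \<in> T" using Z by blast
    then show ?thesis
    proof cases
      case l
      then show ?thesis using r4[OF ll(3,4) l(2) ab i] ll by simp
    next
      case r
      then show ?thesis using new_pt_out[OF r(2) ll(3,4) ab i] ll by (intro notsub) simp
    qed
  next
    case lr
    then show ?thesis using four_lr[OF lr(3,4) _ Z] int by simp
  next
    case rl
    have i: "frame_pts (F1 a) \<inter> frame_pts (N.NF t) \<noteq> {}" using int rl by auto
    have "region (FF X) \<inter> region (FF Y) = region (F1 a) \<inter> region (N.NF t)" using rl by auto
    then show ?thesis using four_lr[OF rl(3,4) i Z] by simp
  next
    case rr
    then have st: "s \<noteq> t" using ne by blast
    have i: "frame_pts (N.NF s) \<inter> frame_pts (N.NF t) \<noteq> {}" using int rr by simp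
    have E: "E2 s t" using newnew_pair[OF rr(3,4) st] i by blast
    from adj_dep[OF rr(3,4) st E] show ?thesis
    proof
      assume d: "dep t = Suc (dep s)"
      then show ?thesis using four_rr[OF rr(3,4) E d Z] rr by simp
    next
      assume d: "dep s = Suc (dep t)"
      have E': "E2 t s" using N.symE[OF rr(3,4) E] .
      have "region (FF X) \<inter> region (FF Y) = region (N.NF t) \<inter> region (N.NF s)" using rr by auto
      then show ?thesis using four_rr[OF rr(4,3) E' d Z] by simp
    qed
  qed
qed

lemma glue_rep: "restricted_frame_rep (Inl ` V1 \<union> Inr ` T) GE FF"
proof (rule rep_intro)
  show "\<forall>u\<in>Inl ` V1 \<union> Inr ` T. valid_frame (FF u)" using valid N.valid_NF by auto
next
  fix u w assume "u \<in> Inl ` V1 \<union> Inr ` T" "w \<in> Inl ` V1 \<union> Inr ` T" "u \<noteq> w"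
  then show "(GE u w \<longleftrightarrow> frame_pts (FF u) \<inter> frame_pts (FF w) \<noteq> {}) \<and> goodp (FF u) (FF w)"
    by (rule pairs)
next
  fix u w z assume "u \<in> Inl ` V1 \<union> Inr ` T" "w \<in> Inl ` V1 \<union> Inr ` T" "z \<in> Inl ` V1 \<union> Inr ` T"
    "u \<noteq> w" "frame_pts (FF u) \<inter> frame_pts (FF w) \<noteq> {}"
  then show "\<not> frame_pts (FF z) \<subseteq> region (FF u) \<inter> region (FF w)" by (rule four)
qed

end


lemma rep_cong:
  assumes "\<And>u w. u \<in> V \<Longrightarrow> w \<in> V \<Longrightarrow> E u w = E' u w" and "restricted_frame_rep V E' F"
  shows "restricted_frame_rep V E F"
proof -
  have "(\<forall>u\<in>V. \<forall>w\<in>V. u \<noteq> w \<longrightarrow> (E u w \<longleftrightarrow> frame_pts (F u) \<inter> frame_pts (F w) \<noteq> {}))"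
  proof (intro ballI impI)
    fix u w assume uw: "u \<in> V" "w \<in> V" "u \<noteq> w"
    have "E' u w \<longleftrightarrow> frame_pts (F u) \<inter> frame_pts (F w) \<noteq> {}"
      using assms(2) uw unfolding restricted_frame_rep_def by blast
    then show "E u w \<longleftrightarrow> frame_pts (F u) \<inter> frame_pts (F w) \<noteq> {}" using assms(1)[OF uw(1,2)] by simp
  qed
  note R = assms(2)[unfolded restricted_frame_rep_def]
  show ?thesis unfolding restricted_frame_rep_def
  proof (intro conjI)
    show "\<forall>u\<in>V. valid_frame (F u)" using R[THEN conjunct1] .
    show "\<forall>u\<in>V. \<forall>w\<in>V. u \<noteq> w \<longrightarrow> corners (F u) \<inter> frame_pts (F w) = {}"
      using R[THEN conjunct2, THEN conjunct2, THEN conjunct1] .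
    show "\<forall>u\<in>V. \<forall>w\<in>V. u \<noteq> w \<longrightarrow> left_side (F u) \<inter> frame_pts (F w) = {}"
      using R[THEN conjunct2, THEN conjunct2, THEN conjunct2, THEN conjunct1] .
    show "\<forall>u\<in>V. \<forall>w\<in>V. u \<noteq> w \<longrightarrow> right_side (F u) \<inter> frame_pts (F w) \<noteq> {} \<longrightarrow>
        right_side (F u) \<inter> top_side (F w) \<noteq> {} \<and> right_side (F u) \<inter> bottom_side (F w) \<noteq> {}"
      using R[THEN conjunct2, THEN conjunct2, THEN conjunct2, THEN conjunct2, THEN conjunct1] .
    show "\<forall>u\<in>V. \<forall>w\<in>V. \<forall>z\<in>V. u \<noteq> w \<longrightarrow> frame_pts (F u) \<inter> frame_pts (F w) \<noteq> {} \<longrightarrow>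
        \<not> frame_pts (F z) \<subseteq> region (F u) \<inter> region (F w)"
      using R[THEN conjunct2, THEN conjunct2, THEN conjunct2, THEN conjunct2, THEN conjunct2] .
  qed fact
qed

theorem lemma4p3:
  fixes V1 :: "'a set" and E1 :: "'a \<Rightarrow> 'a \<Rightarrow> bool"
    and V2 :: "'b set" and E2 :: "'b \<Rightarrow> 'b \<Rightarrow> bool"
    and p :: 'b and v :: 'a
  assumes "restricted_frame_graph V1 E1"
    and "chandelier V2 E2 p"
    and "v \<in> V1"
  shows "restricted_frame_graph (glue_V V1 V2 p) (glue_E E1 E2 v p)"
proof -
  have sg1: "simple_graph V1 E1" using assms(1) unfolding restricted_frame_graph_def by blast
  obtain F1 where rep: "restricted_frame_rep V1 E1 F1" using assms(1) unfolding restricted_frame_graph_def by blast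
  have fin1: "finite V1" and sym1: "\<And>x y. x \<in> V1 \<Longrightarrow> y \<in> V1 \<Longrightarrow> E1 x y \<Longrightarrow> E1 y x"
    and irr1: "\<And>x. x \<in> V1 \<Longrightarrow> \<not> E1 x x" using sg1 unfolding simple_graph_def by blast+
  define T where "T = V2 - {p}"
  have ch: "simple_graph V2 E2 \<and> p \<in> V2 \<and> is_tree T E2 \<and> (\<forall>x\<in>V2 - {p}. E2 p x \<longleftrightarrow> is_leaf T E2 x)"
    using assms(2) unfolding chandelier_def T_def .
  have sg2: "simple_graph V2 E2" and pV: "p \<in> V2" and trT: "is_tree T E2" using ch by blast+
  have lf: "\<And>x. x \<in> T \<Longrightarrow> E2 p x \<longleftrightarrow> is_leaf T E2 x" using ch unfolding T_def by blast
  have fin2: "finite V2" and sym2: "\<And>x y. x \<in> V2 \<Longrightarrow> y \<in> V2 \<Longrightarrow> E2 x y \<Longrightarrow> E2 y x"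
    and irr2: "\<And>x. x \<in> V2 \<Longrightarrow> \<not> E2 x x" using sg2 unfolding simple_graph_def by blast+
  have TV: "\<And>x. x \<in> T \<Longrightarrow> x \<in> V2" unfolding T_def by blast
  have "\<exists>r\<in>T. is_leaf T E2 r \<longrightarrow> (\<forall>t\<in>T. degree T E2 t \<le> 1)"
  proof (cases "\<exists>t\<in>T. 2 \<le> degree T E2 t")
    case True
    then obtain t where t: "t \<in> T" "2 \<le> degree T E2 t" by blast
    then have "\<not> is_leaf T E2 t" unfolding is_leaf_def by simp
    then show ?thesis using t(1) by blast
  next
    case False
    have "T \<noteq> {}" using trT unfolding is_tree_def by blast
    then obtain t where "t \<in> T" by blast
    moreover have "\<forall>t\<in>T. degree T E2 t \<le> 1" using False by auto
    ultimately show ?thesis by blast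
  qed
  then obtain r where rT: "r \<in> T" and root: "is_leaf T E2 r \<Longrightarrow> \<forall>t\<in>T. degree T E2 t \<le> 1" by blast
  obtain dep lo hi where td: "tdata T E2 r dep lo hi" using tree_data[OF trT rT] by blast
  have chd: "chand T E2 r dep lo hi" unfolding chand_def using trT rT td root by blast
  have old: "oldr V1 E1 F1 v" unfolding oldr_def using rep assms(3) fin1 by blast
  interpret G: glue V1 E1 F1 v T E2 r dep lo hi
    unfolding glue_def glue_axioms_def using old chd by blast
  have GV: "glue_V V1 V2 p = Inl ` V1 \<union> Inr ` T" unfolding glue_V_def T_def ..
  have Eeq: "glue_E E1 E2 v p X Y = G.GE X Y" if X: "X \<in> Inl ` V1 \<union> Inr ` T" and Y: "Y \<in> Inl ` V1 \<union> Inr ` T" for X Y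
  proof -
    consider (ll) a b where "X = Inl a" "Y = Inl b"
      | (lr) a t where "X = Inl a" "Y = Inr t" "t \<in> T"
      | (rl) t a where "X = Inr t" "Y = Inl a" "t \<in> T"
      | (rr) s t where "X = Inr s" "Y = Inr t"
      using X Y by blast
    then show ?thesis
    proof cases
      case ll then show ?thesis by simp
    next
      case lr then show ?thesis using lf[OF lr(3)] by simp
    next
      case rl
      have "E2 t p \<longleftrightarrow> E2 p t" using sym2[OF TV[OF rl(3)] pV] sym2[OF pV TV[OF rl(3)]] by blast
      then show ?thesis using rl lf[OF rl(3)] by simp
    next
      case rr then show ?thesis by simp
    qed
  qed
  have rep': "restricted_frame_rep (glue_V V1 V2 p) (glue_E E1 E2 v p) G.FF"
    unfolding GV by (rule rep_cong[OF _ G.glue_rep]) (rule Eeq)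
  have sgG: "simple_graph (glue_V V1 V2 p) (glue_E E1 E2 v p)" unfolding simple_graph_def
  proof (intro conjI ballI impI)
    show "finite (glue_V V1 V2 p)" unfolding glue_V_def using fin1 fin2 by simp
  next
    fix X Y assume X: "X \<in> glue_V V1 V2 p" and Y: "Y \<in> glue_V V1 V2 p" and e: "glue_E E1 E2 v p X Y"
    consider (ll) a b where "X = Inl a" "Y = Inl b" "a \<in> V1" "b \<in> V1"
      | (lr) a t where "X = Inl a" "Y = Inr t" "t \<in> T"
      | (rl) t a where "X = Inr t" "Y = Inl a" "t \<in> T"
      | (rr) s t where "X = Inr s" "Y = Inr t" "s \<in> T" "t \<in> T"
      using X Y unfolding GV by blast
    then show "glue_E E1 E2 v p Y X"
    proof cases
      case ll then show ?thesis using e sym1 by simp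
    next
      case lr
      then have "a = v" "E2 p t" using e by simp_all
      then show ?thesis using lr sym2[OF pV TV[OF lr(3)]] by simp
    next
      case rl
      then have "a = v" "E2 t p" using e by simp_all
      then show ?thesis using rl sym2[OF TV[OF rl(3)] pV] by simp
    next
      case rr
      then have "E2 s t" using e by simp
      then show ?thesis using rr sym2[OF TV[OF rr(3)] TV[OF rr(4)]] by simp
    qed
  next
    fix X assume X: "X \<in> glue_V V1 V2 p"
    consider (l) a where "X = Inl a" "a \<in> V1" | (r) t where "X = Inr t" "t \<in> T"
      using X unfolding GV by blast
    then show "\<not> glue_E E1 E2 v p X X"
    proof cases
      case l then show ?thesis using irr1 by simp
    next
      case r then show ?thesis using irr2[OF TV[OF r(2)]] by simp
    qed
  qed
  show ?thesis unfolding restricted_frame_graph_def using sgG rep' by blast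
qed


end
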